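(* Let $d\ge 2$, let $\mathbb{F}_q$ be a finite field of odd characteristic, and let $S_j=\{x\in\mathbb{F}_q^d : Q(x)=j\}$ with $j\in\mathbb{F}_q^*$ and $Q$ a non-degenerate quadratic form over $\mathbb{F}_q$. Then \[R^*(2\rightarrow 4)\lesssim 1.\]
   Context: $\chi$ is a fixed non-trivial additive character of $\mathbb{F}_q$. A quadratic form $Q(x)=\sum_{i,k=1}^d a_{ik}x_ix_k$ with $a_{ik}=a_{ki}\in\mathbb{F}_q$ is non-degenerate if the matrix $(a_{ik})$ is invertible. For $f:S_j\to\mathbb{C}$ and $m\in\mathbb{F}_q^d$, $\widehat{fd\sigma}(m)=\frac{1}{\#S_j}\sum_{x\in S_j}\chi(-x\cdot m)f(x)$. Norms: $\|g\|_{L^r(\mathbb{F}_q^d,dm)}=\big(\sum_{m\in\mathbb{F}_q^d}|g(m)|^r\big)^{1/r}$ and $\|f\|_{L^p(S_j,d\sigma)}=\big(\frac{1}{\#S_j}\sum_{x\in S_j}|f(x)|^p\big)^{1/p}$. $R^*(p\rightarrow r)$ denotes the best constant such that $\|\widehat{fd\sigma}\|_{L^r(\mathbb{F}_q^d,dm)}\le R^*(p\rightarrow r)\|f\|_{L^p(S_j,d\sigma)}$ for all $f:S_j\to\mathbb{C}$. $X\lesssim Y$ means $X\le CY$ for a constant $C$ independent of $q$. *)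

theory Defs
  imports Complex_Main "HOL-Algebra.Ring" "HOL-Library.FuncSet"
begin

text \<open>Finite fields are represented as HOL-Algebra rings with carrier contained in nat
  (every finite field is isomorphic to such a structure); this allows quantifying over all
  finite fields (of all sizes q) inside the statement.\<close>

definition vecs :: "nat ring \<Rightarrow> nat \<Rightarrow> (nat \<Rightarrow> nat) set" where
  "vecs R d = ({..<d} \<rightarrow>\<^sub>E carrier R)"

definition dotp :: "nat ring \<Rightarrow> nat \<Rightarrow> (nat \<Rightarrow> nat) \<Rightarrow> (nat \<Rightarrow> nat) \<Rightarrow> nat" where
  "dotp R d x m = finsum R (\<lambda>i. x i \<otimes>\<^bsub>R\<^esub> m i) {..<d}"

definition quad_form :: "nat ring \<Rightarrow> nat \<Rightarrow> (nat \<Rightarrow> nat \<Rightarrow> nat) \<Rightarrow> (nat \<Rightarrow> nat) \<Rightarrow> nat" where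
  "quad_form R d a x = finsum R (\<lambda>i. finsum R (\<lambda>k. a i k \<otimes>\<^bsub>R\<^esub> x i \<otimes>\<^bsub>R\<^esub> x k) {..<d}) {..<d}"

definition sym_coeffs :: "nat ring \<Rightarrow> nat \<Rightarrow> (nat \<Rightarrow> nat \<Rightarrow> nat) \<Rightarrow> bool" where
  "sym_coeffs R d a \<longleftrightarrow> (\<forall>i<d. \<forall>k<d. a i k \<in> carrier R \<and> a i k = a k i)"

definition mat_invertible :: "nat ring \<Rightarrow> nat \<Rightarrow> (nat \<Rightarrow> nat \<Rightarrow> nat) \<Rightarrow> bool" where
  "mat_invertible R d a \<longleftrightarrow> (\<exists>b. (\<forall>i<d. \<forall>k<d. b i k \<in> carrier R) \<and>
     (\<forall>i<d. \<forall>l<d. finsum R (\<lambda>k. a i k \<otimes>\<^bsub>R\<^esub> b k l) {..<d} = (if i = l then \<one>\<^bsub>R\<^esub> else \<zero>\<^bsub>R\<^esub>)) \<and>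
     (\<forall>i<d. \<forall>l<d. finsum R (\<lambda>k. b i k \<otimes>\<^bsub>R\<^esub> a k l) {..<d} = (if i = l then \<one>\<^bsub>R\<^esub> else \<zero>\<^bsub>R\<^esub>)))"

definition nontriv_add_char :: "nat ring \<Rightarrow> (nat \<Rightarrow> complex) \<Rightarrow> bool" where
  "nontriv_add_char R \<chi> \<longleftrightarrow>
     (\<forall>a\<in>carrier R. \<chi> a \<noteq> 0) \<and>
     (\<forall>a\<in>carrier R. \<forall>b\<in>carrier R. \<chi> (a \<oplus>\<^bsub>R\<^esub> b) = \<chi> a * \<chi> b) \<and>
     (\<exists>a\<in>carrier R. \<chi> a \<noteq> 1)"

definition sphere_set :: "nat ring \<Rightarrow> nat \<Rightarrow> (nat \<Rightarrow> nat \<Rightarrow> nat) \<Rightarrow> nat \<Rightarrow> (nat \<Rightarrow> nat) set" where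
  "sphere_set R d a j = {x \<in> vecs R d. quad_form R d a x = j}"

definition ext_op :: "nat ring \<Rightarrow> nat \<Rightarrow> (nat \<Rightarrow> complex) \<Rightarrow> (nat \<Rightarrow> nat) set
    \<Rightarrow> ((nat \<Rightarrow> nat) \<Rightarrow> complex) \<Rightarrow> (nat \<Rightarrow> nat) \<Rightarrow> complex" where
  "ext_op R d \<chi> S f m = (1 / of_nat (card S)) * (\<Sum>x\<in>S. \<chi> (\<ominus>\<^bsub>R\<^esub> dotp R d x m) * f x)"

definition norm_dm :: "nat ring \<Rightarrow> nat \<Rightarrow> real \<Rightarrow> ((nat \<Rightarrow> nat) \<Rightarrow> complex) \<Rightarrow> real" where
  "norm_dm R d r g = (\<Sum>m\<in>vecs R d. cmod (g m) powr r) powr (1 / r)"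

definition norm_dsigma :: "(nat \<Rightarrow> nat) set \<Rightarrow> real \<Rightarrow> ((nat \<Rightarrow> nat) \<Rightarrow> complex) \<Rightarrow> real" where
  "norm_dsigma S p f = ((1 / real (card S)) * (\<Sum>x\<in>S. cmod (f x) powr p)) powr (1 / p)"

definition R_star :: "nat ring \<Rightarrow> nat \<Rightarrow> (nat \<Rightarrow> complex) \<Rightarrow> (nat \<Rightarrow> nat) set \<Rightarrow> real \<Rightarrow> real \<Rightarrow> real" where
  "R_star R d \<chi> S p r = Inf {C. 0 \<le> C \<and> (\<forall>f. norm_dm R d r (ext_op R d \<chi> S f) \<le> C * norm_dsigma S p f)}"

end

theory Submission
  imports Defs
begin


lemma kill_sum:
  fixes \<phi> :: "'b \<Rightarrow> 'c" and c :: "'c \<Rightarrow> complex"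
  assumes fin: "finite A"
    and t1: "\<And>m. m \<in> A \<Longrightarrow> \<tau> m \<in> A" and s1: "\<And>m. m \<in> A \<Longrightarrow> \<sigma> m \<in> A"
    and ts: "\<And>m. m \<in> A \<Longrightarrow> \<tau> (\<sigma> m) = m" and st: "\<And>m. m \<in> A \<Longrightarrow> \<sigma> (\<tau> m) = m"
    and sh: "\<And>m. m \<in> A \<Longrightarrow> c (\<phi> (\<tau> m)) = c (\<phi> m) * z"
    and z: "z \<noteq> 1"
  shows "(\<Sum>m\<in>A. c (\<phi> m)) = 0"
proof -
  have "(\<Sum>m\<in>A. c (\<phi> m)) = (\<Sum>m\<in>A. c (\<phi> (\<tau> m)))"
    by (rule sum.reindex_bij_witness[where i=\<tau> and j=\<sigma>]) (auto simp: t1 s1 ts st)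
  also have "\<dots> = (\<Sum>m\<in>A. c (\<phi> m)) * z" by (simp add: sh sum_distrib_right)
  finally have "(\<Sum>m\<in>A. c (\<phi> m)) * (1 - z) = 0" by (simp add: algebra_simps)
  with z show ?thesis by simp
qed

locale sq_setup = field R for R :: "nat ring" (structure) +
  fixes d :: nat and \<chi> :: "nat \<Rightarrow> complex" and A :: "nat \<Rightarrow> nat \<Rightarrow> nat" and j :: nat
  assumes fin: "finite (carrier R)" and two: "\<one> \<oplus> \<one> \<noteq> \<zero>"
    and chi: "nontriv_add_char R \<chi>" and symA: "sym_coeffs R d A"
    and invA: "mat_invertible R d A" and jc: "j \<in> carrier R" and j0: "j \<noteq> \<zero>"
    and d2: "2 \<le> d"
begin

abbreviation "q \<equiv> card (carrier R)"

lemma chi_nz: "x \<in> carrier R \<Longrightarrow> \<chi> x \<noteq> 0" using chi unfolding nontriv_add_char_def by blast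
lemma chi_add: "x \<in> carrier R \<Longrightarrow> y \<in> carrier R \<Longrightarrow> \<chi> (x \<oplus> y) = \<chi> x * \<chi> y"
  using chi unfolding nontriv_add_char_def by blast
lemma chi_nt: "\<exists>b\<in>carrier R. \<chi> b \<noteq> 1" using chi unfolding nontriv_add_char_def by blast

lemma chi0: "\<chi> \<zero> = 1"
proof -
  have "\<chi> \<zero> = \<chi> \<zero> * \<chi> \<zero>" using chi_add[of \<zero> \<zero>] by simp
  with chi_nz[of \<zero>] show ?thesis by simp
qed

lemma chi_neg: "x \<in> carrier R \<Longrightarrow> \<chi> (\<ominus> x) * \<chi> x = 1"
  using chi_add[of "\<ominus> x" x] chi0 by (simp add: l_neg)

lemma chi_norm: assumes x: "x \<in> carrier R" shows "cmod (\<chi> x) = 1"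
proof -
  let ?T = "\<Sum>t\<in>carrier R. cmod (\<chi> t)"
  have "?T = (\<Sum>t\<in>carrier R. cmod (\<chi> (t \<oplus> x)))"
    by (rule sum.reindex_bij_witness[where j="\<lambda>t. t \<ominus> x" and i="\<lambda>t. t \<oplus> x"])
       (auto simp: x a_minus_def a_assoc l_neg r_neg)
  also have "\<dots> = ?T * cmod (\<chi> x)" by (simp add: chi_add x norm_mult sum_distrib_right)
  finally have "?T * (1 - cmod (\<chi> x)) = 0" by (simp add: algebra_simps)
  moreover have "?T > 0"
  proof -
    have "?T \<ge> cmod (\<chi> \<zero>)" by (rule member_le_sum) (auto simp: fin)
    then show ?thesis by (simp add: chi0)
  qed
  ultimately show ?thesis by simp
qed

lemma chi_cnj: "x \<in> carrier R \<Longrightarrow> cnj (\<chi> x) = \<chi> (\<ominus> x)"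
proof -
  assume x: "x \<in> carrier R"
  have "cnj (\<chi> x) * \<chi> x = 1" using chi_norm[OF x]
    by (metis complex_norm_square mult.commute of_real_1 power_one)
  with chi_neg[OF x] chi_nz[OF x] show ?thesis
    by (metis mult_cancel_right)
qed

lemma sum_chi_all: "(\<Sum>t\<in>carrier R. \<chi> t) = 0"
proof -
  obtain b where b: "b \<in> carrier R" "\<chi> b \<noteq> 1" using chi_nt by blast
  show ?thesis
    by (rule kill_sum[where \<tau>="\<lambda>t. t \<oplus> b" and \<sigma>="\<lambda>t. t \<ominus> b" and \<phi>="\<lambda>t. t" and z="\<chi> b"])
       (auto simp: fin b chi_add a_minus_def a_assoc l_neg r_neg)
qed

lemma orth1: assumes c: "c \<in> carrier R"
  shows "(\<Sum>t\<in>carrier R. \<chi> (c \<otimes> t)) = (if c = \<zero> then of_nat q else 0)"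
proof (cases "c = \<zero>")
  case True then show ?thesis by (simp add: chi0)
next
  case False
  then have cu: "c \<in> Units R" using c field_Units by blast
  have "(\<Sum>t\<in>carrier R. \<chi> (c \<otimes> t)) = (\<Sum>t\<in>carrier R. \<chi> t)"
    by (rule sum.reindex_bij_witness[where i="\<lambda>t. inv c \<otimes> t" and j="\<lambda>t. c \<otimes> t"])
       (auto simp: cu c m_assoc[symmetric] Units_r_inv Units_l_inv)
  then show ?thesis using False sum_chi_all by simp
qed

end


context sq_setup begin

lemma finsum_swap:
  assumes "finite I" "finite J" "\<And>i k. i \<in> I \<Longrightarrow> k \<in> J \<Longrightarrow> f i k \<in> carrier R"
  shows "(\<Oplus>i\<in>I. \<Oplus>k\<in>J. f i k) = (\<Oplus>k\<in>J. \<Oplus>i\<in>I. f i k)"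
  using assms
proof (induction I rule: finite_induct)
  case empty
  then show ?case by (simp add: finsum_zero)
next
  case (insert x F)
  have "(\<Oplus>i\<in>insert x F. \<Oplus>k\<in>J. f i k) = (\<Oplus>k\<in>J. f x k) \<oplus> (\<Oplus>i\<in>F. \<Oplus>k\<in>J. f i k)"
    using insert by (intro finsum_insert) (auto intro!: finsum_closed)
  also have "\<dots> = (\<Oplus>k\<in>J. f x k) \<oplus> (\<Oplus>k\<in>J. \<Oplus>i\<in>F. f i k)" using insert by simp
  also have "\<dots> = (\<Oplus>k\<in>J. f x k \<oplus> (\<Oplus>i\<in>F. f i k))"
    using insert by (intro finsum_addf[symmetric]) (auto intro!: finsum_closed)
  also have "\<dots> = (\<Oplus>k\<in>J. \<Oplus>i\<in>insert x F. f i k)"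
    using insert by (intro finsum_cong) (auto intro!: finsum_closed simp: finsum_insert)
  finally show ?case .
qed

definition V where "V = vecs R d"
definition vz where "vz = (\<lambda>i\<in>{..<d}. \<zero>)"
definition vadd where "vadd x y = (\<lambda>i\<in>{..<d}. x i \<oplus> y i)"
definition vsm where "vsm c x = (\<lambda>i\<in>{..<d}. c \<otimes> x i)"
definition Av where "Av x = (\<lambda>i\<in>{..<d}. \<Oplus>k\<in>{..<d}. A i k \<otimes> x k)"
abbreviation "dot \<equiv> dotp R d"
abbreviation "Q \<equiv> quad_form R d A"

lemma V_iff: "x \<in> V \<longleftrightarrow> (\<forall>i<d. x i \<in> carrier R) \<and> (\<forall>i. \<not> i < d \<longrightarrow> x i = undefined)"
  by (auto simp: V_def vecs_def PiE_iff extensional_def)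

lemma V_comp: "x \<in> V \<Longrightarrow> i < d \<Longrightarrow> x i \<in> carrier R" by (simp add: V_iff)

lemma V_ext: "x \<in> V \<Longrightarrow> y \<in> V \<Longrightarrow> (\<And>i. i < d \<Longrightarrow> x i = y i) \<Longrightarrow> x = y"
  by (rule ext) (metis V_iff)

lemma V_fin: "finite V" by (simp add: V_def vecs_def fin finite_PiE)
lemma V_card: "card V = q ^ d" by (simp add: V_def vecs_def card_PiE)

lemma A_c: "i < d \<Longrightarrow> k < d \<Longrightarrow> A i k \<in> carrier R" using symA by (simp add: sym_coeffs_def)
lemma A_sym: "i < d \<Longrightarrow> k < d \<Longrightarrow> A i k = A k i" using symA by (simp add: sym_coeffs_def)

lemma vz_V[simp]: "vz \<in> V" by (simp add: V_iff vz_def)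
lemma vadd_V[simp]: "x \<in> V \<Longrightarrow> y \<in> V \<Longrightarrow> vadd x y \<in> V" by (simp add: V_iff vadd_def)
lemma vsm_V[simp]: "c \<in> carrier R \<Longrightarrow> x \<in> V \<Longrightarrow> vsm c x \<in> V" by (simp add: V_iff vsm_def)
lemma Av_V[simp]: "x \<in> V \<Longrightarrow> Av x \<in> V"
  by (auto simp: V_iff Av_def A_c intro!: finsum_closed)

lemma vz_i[simp]: "i < d \<Longrightarrow> vz i = \<zero>" by (simp add: vz_def)
lemma vadd_i[simp]: "i < d \<Longrightarrow> vadd x y i = x i \<oplus> y i" by (simp add: vadd_def)
lemma vsm_i[simp]: "i < d \<Longrightarrow> vsm c x i = c \<otimes> x i" by (simp add: vsm_def)
lemma Av_i: "i < d \<Longrightarrow> Av x i = (\<Oplus>k\<in>{..<d}. A i k \<otimes> x k)" by (simp add: Av_def)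

lemma dot_closed[simp]: "x \<in> V \<Longrightarrow> y \<in> V \<Longrightarrow> dot x y \<in> carrier R"
  by (auto simp: dotp_def V_comp intro!: finsum_closed)

lemma dot_comm: "x \<in> V \<Longrightarrow> y \<in> V \<Longrightarrow> dot x y = dot y x"
  unfolding dotp_def by (intro finsum_cong) (auto simp: V_comp m_comm)

lemma dot_add_l: "x \<in> V \<Longrightarrow> y \<in> V \<Longrightarrow> m \<in> V \<Longrightarrow> dot (vadd x y) m = dot x m \<oplus> dot y m"
proof -
  assume a: "x \<in> V" "y \<in> V" "m \<in> V"
  have "dot (vadd x y) m = (\<Oplus>i\<in>{..<d}. x i \<otimes> m i \<oplus> y i \<otimes> m i)"
    unfolding dotp_def using a by (intro finsum_cong) (auto simp: V_comp l_distr)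
  also have "\<dots> = dot x m \<oplus> dot y m"
    unfolding dotp_def using a by (intro finsum_addf) (auto simp: V_comp)
  finally show ?thesis .
qed

lemma dot_sm_l: "c \<in> carrier R \<Longrightarrow> x \<in> V \<Longrightarrow> m \<in> V \<Longrightarrow> dot (vsm c x) m = c \<otimes> dot x m"
proof -
  assume a: "c \<in> carrier R" "x \<in> V" "m \<in> V"
  have "dot (vsm c x) m = (\<Oplus>i\<in>{..<d}. c \<otimes> (x i \<otimes> m i))"
    unfolding dotp_def using a by (intro finsum_cong) (auto simp: V_comp m_assoc)
  also have "\<dots> = c \<otimes> dot x m"
    unfolding dotp_def using a by (intro finsum_rdistr[symmetric]) (auto simp: V_comp)
  finally show ?thesis .
qed

lemma dot_z_l[simp]: "m \<in> V \<Longrightarrow> dot vz m = \<zero>"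
  unfolding dotp_def by (simp add: V_comp finsum_zero cong: finsum_cong)

lemma dot_add_r: "x \<in> V \<Longrightarrow> y \<in> V \<Longrightarrow> m \<in> V \<Longrightarrow> dot m (vadd x y) = dot m x \<oplus> dot m y"
  using dot_comm[of m "vadd x y"] dot_comm[of m x] dot_comm[of m y] dot_add_l by simp
lemma dot_sm_r: "c \<in> carrier R \<Longrightarrow> x \<in> V \<Longrightarrow> m \<in> V \<Longrightarrow> dot m (vsm c x) = c \<otimes> dot m x"
  using dot_comm[of m "vsm c x"] dot_comm[of m x] dot_sm_l by simp
lemma dot_z_r[simp]: "m \<in> V \<Longrightarrow> dot m vz = \<zero>"
  using dot_comm[of m vz] by simp

lemma Av_add: "x \<in> V \<Longrightarrow> y \<in> V \<Longrightarrow> Av (vadd x y) = vadd (Av x) (Av y)"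
proof (rule V_ext)
  fix i assume a: "x \<in> V" "y \<in> V" and i: "i < d"
  have "Av (vadd x y) i = (\<Oplus>k\<in>{..<d}. A i k \<otimes> x k \<oplus> A i k \<otimes> y k)"
    unfolding Av_i[OF i] using a i by (intro finsum_cong) (auto simp: V_comp r_distr A_c)
  also have "\<dots> = Av x i \<oplus> Av y i"
    unfolding Av_i[OF i] using a i by (intro finsum_addf) (auto simp: V_comp A_c)
  finally show "Av (vadd x y) i = vadd (Av x) (Av y) i" using i by simp
qed auto

lemma Av_sm: "c \<in> carrier R \<Longrightarrow> x \<in> V \<Longrightarrow> Av (vsm c x) = vsm c (Av x)"
proof (rule V_ext)
  fix i assume a: "c \<in> carrier R" "x \<in> V" and i: "i < d"
  have "Av (vsm c x) i = (\<Oplus>k\<in>{..<d}. c \<otimes> (A i k \<otimes> x k))"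
    unfolding Av_i[OF i] using a i by (intro finsum_cong) (auto simp: V_comp A_c m_lcomm)
  also have "\<dots> = c \<otimes> Av x i"
    unfolding Av_i[OF i] using a i by (intro finsum_rdistr[symmetric]) (auto simp: V_comp A_c)
  finally show "Av (vsm c x) i = vsm c (Av x) i" using i by simp
qed auto

lemma Q_dot: "x \<in> V \<Longrightarrow> Q x = dot x (Av x)"
proof -
  assume x: "x \<in> V"
  have e: "(\<Oplus>k\<in>{..<d}. A i k \<otimes> x i \<otimes> x k) = x i \<otimes> (\<Oplus>k\<in>{..<d}. A i k \<otimes> x k)"
    if i: "i < d" for i
  proof -
    have "x i \<otimes> (\<Oplus>k\<in>{..<d}. A i k \<otimes> x k) = (\<Oplus>k\<in>{..<d}. x i \<otimes> (A i k \<otimes> x k))"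
      using x i by (intro finsum_rdistr) (auto simp: V_comp A_c)
    also have "\<dots> = (\<Oplus>k\<in>{..<d}. A i k \<otimes> x i \<otimes> x k)"
      using x i by (intro finsum_cong) (auto simp: V_comp A_c m_ac)
    finally show ?thesis by simp
  qed
  have "Q x = (\<Oplus>i\<in>{..<d}. x i \<otimes> (\<Oplus>k\<in>{..<d}. A i k \<otimes> x k))"
    unfolding quad_form_def using x
    by (intro finsum_cong) (auto simp: V_comp A_c e intro!: finsum_closed)
  also have "\<dots> = dot x (Av x)" unfolding dotp_def using x
    by (intro finsum_cong) (auto simp: Av_i V_comp A_c intro!: finsum_closed)
  finally show ?thesis .
qed

lemma dot_Av_sym: "x \<in> V \<Longrightarrow> y \<in> V \<Longrightarrow> dot x (Av y) = dot y (Av x)"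
proof -
  assume a: "x \<in> V" "y \<in> V"
  have "dot x (Av y) = (\<Oplus>i\<in>{..<d}. \<Oplus>k\<in>{..<d}. x i \<otimes> (A i k \<otimes> y k))"
    unfolding dotp_def using a
    by (intro finsum_cong) (auto simp: V_comp A_c Av_i finsum_rdistr intro!: finsum_closed)
  also have "\<dots> = (\<Oplus>k\<in>{..<d}. \<Oplus>i\<in>{..<d}. x i \<otimes> (A i k \<otimes> y k))"
    using a by (intro finsum_swap) (auto simp: V_comp A_c)
  also have "\<dots> = (\<Oplus>k\<in>{..<d}. y k \<otimes> (\<Oplus>i\<in>{..<d}. A k i \<otimes> x i))"
  proof -
    have e: "(\<Oplus>i\<in>{..<d}. x i \<otimes> (A i k \<otimes> y k)) = y k \<otimes> (\<Oplus>i\<in>{..<d}. A k i \<otimes> x i)"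
      if k: "k < d" for k
    proof -
      have "y k \<otimes> (\<Oplus>i\<in>{..<d}. A k i \<otimes> x i) = (\<Oplus>i\<in>{..<d}. y k \<otimes> (A k i \<otimes> x i))"
        using a k by (intro finsum_rdistr) (auto simp: V_comp A_c)
      also have "\<dots> = (\<Oplus>i\<in>{..<d}. x i \<otimes> (A i k \<otimes> y k))"
        using a k by (intro finsum_cong) (auto simp: V_comp A_c m_ac A_sym)
      finally show ?thesis by simp
    qed
    show ?thesis using a by (intro finsum_cong) (auto simp: V_comp A_c e intro!: finsum_closed)
  qed
  also have "\<dots> = dot y (Av x)" unfolding dotp_def using a
    by (intro finsum_cong) (auto simp: Av_i V_comp A_c intro!: finsum_closed)
  finally show ?thesis .
qed

end


context sq_setup begin

definition vneg where "vneg x = vsm (\<ominus> \<one>) x"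
definition ev where "ev i = (\<lambda>k\<in>{..<d}. if k = i then \<one> else \<zero>)"

lemma vneg_V[simp]: "x \<in> V \<Longrightarrow> vneg x \<in> V" by (simp add: vneg_def)
lemma vneg_i[simp]: "i < d \<Longrightarrow> vneg x i = \<ominus> \<one> \<otimes> x i" by (simp add: vneg_def)
lemma ev_V[simp]: "ev i \<in> V" by (simp add: V_iff ev_def)

lemma r1: "a \<in> carrier R \<Longrightarrow> b \<in> carrier R \<Longrightarrow> a \<oplus> b \<oplus> \<ominus> \<one> \<otimes> b = a" by algebra
lemma r2: "a \<in> carrier R \<Longrightarrow> b \<in> carrier R \<Longrightarrow> a \<oplus> \<ominus> \<one> \<otimes> b \<oplus> b = a" by algebra
lemma r3: "a \<in> carrier R \<Longrightarrow> a \<oplus> \<ominus> \<one> \<otimes> a = \<zero>" by algebra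
lemma r4: "a \<in> carrier R \<Longrightarrow> b \<in> carrier R \<Longrightarrow> e \<in> carrier R \<Longrightarrow>
   a \<oplus> b \<oplus> (b \<oplus> e) = a \<oplus> e \<oplus> (\<one> \<oplus> \<one>) \<otimes> b" by algebra

lemma r5: "a \<in> carrier R \<Longrightarrow> \<ominus> \<one> \<otimes> \<ominus> \<one> \<otimes> a = a" by algebra

lemma cancel1: "x \<in> V \<Longrightarrow> y \<in> V \<Longrightarrow> vadd (vadd x y) (vneg y) = x"
  by (rule V_ext) (auto simp: V_comp r1)
lemma cancel2: "x \<in> V \<Longrightarrow> y \<in> V \<Longrightarrow> vadd (vadd x (vneg y)) y = x"
  by (rule V_ext) (auto simp: V_comp r2)
lemma vadd_comm: "x \<in> V \<Longrightarrow> y \<in> V \<Longrightarrow> vadd x y = vadd y x"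
  by (rule V_ext) (auto simp: V_comp a_comm)
lemma vadd_z: "x \<in> V \<Longrightarrow> vadd x vz = x"
  by (rule V_ext) (auto simp: V_comp)
lemma vadd_neg_z: "x \<in> V \<Longrightarrow> vadd x (vneg x) = vz"
  by (rule V_ext) (auto simp: V_comp r3)

lemma dot_neg_l: "x \<in> V \<Longrightarrow> m \<in> V \<Longrightarrow> dot (vneg x) m = \<ominus> dot x m"
  by (simp add: vneg_def dot_sm_l l_minus)
lemma dot_neg_r: "x \<in> V \<Longrightarrow> m \<in> V \<Longrightarrow> dot m (vneg x) = \<ominus> dot m x"
  by (simp add: vneg_def dot_sm_r l_minus)

lemma dot_ev: "m \<in> V \<Longrightarrow> i < d \<Longrightarrow> dot (ev i) m = m i"
proof -
  assume m: "m \<in> V" and i: "i < d"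
  have "dot (ev i) m = (\<Oplus>k\<in>{..<d}. if i = k then m k else \<zero>)"
    unfolding dotp_def ev_def using m i by (intro finsum_cong') (auto simp: V_comp)
  also have "\<dots> = m i" using m i by (intro finsum_singleton) (auto simp: V_comp)
  finally show ?thesis .
qed

lemma nz_comp: "x \<in> V \<Longrightarrow> x \<noteq> vz \<Longrightarrow> \<exists>i<d. x i \<noteq> \<zero>"
  using V_ext[of x vz] by auto

lemma orth_vec: assumes v: "v \<in> V"
  shows "(\<Sum>m\<in>V. \<chi> (dot m v)) = (if v = vz then of_nat (q ^ d) else 0)"
proof (cases "v = vz")
  case True then show ?thesis by (simp add: chi0 V_card)
next
  case False
  obtain i where i: "i < d" "v i \<noteq> \<zero>" using nz_comp[OF v False] by blast
  obtain b where b: "b \<in> carrier R" "\<chi> b \<noteq> 1" using chi_nt by blast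
  have viU: "v i \<in> Units R" using i V_comp[OF v i(1)] field_Units by blast
  define \<delta> where "\<delta> = vsm (b \<otimes> inv (v i)) (ev i)"
  have dV: "\<delta> \<in> V" using viU b by (simp add: \<delta>_def)
  have iv: "inv (v i) \<otimes> v i = \<one>" "inv (v i) \<in> carrier R" using viU by auto
  have dd: "dot \<delta> v = b" using viU b v i iv V_comp[OF v i(1)] m_assoc[of b "inv (v i)" "v i"]
    by (simp add: \<delta>_def dot_sm_l dot_ev)
  have "(\<Sum>m\<in>V. \<chi> (dot m v)) = 0"
    by (rule kill_sum[where \<tau>="\<lambda>m. vadd m \<delta>" and \<sigma>="\<lambda>m. vadd m (vneg \<delta>)" and z="\<chi> b"])
       (auto simp: V_fin dV cancel1 cancel2 dot_add_l v dd chi_add b)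
  then show ?thesis using False by simp
qed

lemma Av_z: "Av vz = vz"
  by (rule V_ext) (auto simp: Av_i finsum_zero A_c cong: finsum_cong)

lemma Av_inj: assumes x: "x \<in> V" and z: "Av x = vz" shows "x = vz"
proof -
  obtain B where B: "\<forall>i<d. \<forall>k<d. B i k \<in> carrier R"
    "\<forall>i<d. \<forall>l<d. (\<Oplus>k\<in>{..<d}. B i k \<otimes> A k l) = (if i = l then \<one> else \<zero>)"
    using invA unfolding mat_invertible_def by blast
  show ?thesis
  proof (rule V_ext)
    fix l assume l: "l < d"
    have "\<zero> = (\<Oplus>k\<in>{..<d}. B l k \<otimes> Av x k)"
      using z l B(1) by (simp add: finsum_zero cong: finsum_cong)
    also have "\<dots> = (\<Oplus>k\<in>{..<d}. \<Oplus>i\<in>{..<d}. B l k \<otimes> A k i \<otimes> x i)"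
    proof -
      have e: "B l k \<otimes> Av x k = (\<Oplus>i\<in>{..<d}. B l k \<otimes> A k i \<otimes> x i)" if k: "k < d" for k
      proof -
        have "B l k \<otimes> Av x k = (\<Oplus>i\<in>{..<d}. B l k \<otimes> (A k i \<otimes> x i))"
          unfolding Av_i[OF k] using l k B(1) x by (intro finsum_rdistr) (auto simp: A_c V_comp)
        also have "\<dots> = (\<Oplus>i\<in>{..<d}. B l k \<otimes> A k i \<otimes> x i)"
          using l k B(1) x by (intro finsum_cong') (auto simp: A_c V_comp m_assoc)
        finally show ?thesis .
      qed
      show ?thesis using l B(1) x by (intro finsum_cong') (auto simp: e A_c V_comp intro!: finsum_closed)
    qed
    also have "\<dots> = (\<Oplus>i\<in>{..<d}. \<Oplus>k\<in>{..<d}. B l k \<otimes> A k i \<otimes> x i)"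
      using l B(1) x by (intro finsum_swap) (auto simp: A_c V_comp)
    also have "\<dots> = (\<Oplus>i\<in>{..<d}. (if l = i then x i else \<zero>))"
    proof -
      have e: "(\<Oplus>k\<in>{..<d}. B l k \<otimes> A k i \<otimes> x i) = (if l = i then x i else \<zero>)" if i: "i < d" for i
      proof -
        have "(\<Oplus>k\<in>{..<d}. B l k \<otimes> A k i \<otimes> x i) = (\<Oplus>k\<in>{..<d}. B l k \<otimes> A k i) \<otimes> x i"
          using l i B(1) x by (intro finsum_ldistr[symmetric]) (auto simp: A_c V_comp)
        then show ?thesis using B(2) l i x by (simp add: V_comp)
      qed
      show ?thesis using x l B(1) by (intro finsum_cong) (auto simp: e V_comp A_c intro!: finsum_closed)
    qed
    also have "\<dots> = x l" using l x by (intro finsum_singleton) (auto simp: V_comp)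
    finally show "x l = vz l" using l by simp
  qed (auto simp: x)
qed

lemma Q_add: assumes y: "y \<in> V" and h: "h \<in> V"
  shows "Q (vadd y h) = Q y \<oplus> Q h \<oplus> (\<one> \<oplus> \<one>) \<otimes> dot y (Av h)"
proof -
  have "Q (vadd y h) = dot (vadd y h) (vadd (Av y) (Av h))" using y h by (simp add: Q_dot Av_add)
  also have "\<dots> = dot y (Av y) \<oplus> dot h (Av y) \<oplus> (dot y (Av h) \<oplus> dot h (Av h))"
    using y h by (simp add: dot_add_l dot_add_r)
  also have "\<dots> = Q y \<oplus> Q h \<oplus> (\<one> \<oplus> \<one>) \<otimes> dot y (Av h)"
    using y h dot_Av_sym[OF h y] by (simp add: Q_dot r4)
  finally show ?thesis .
qed

lemma Q_sm: "c \<in> carrier R \<Longrightarrow> x \<in> V \<Longrightarrow> Q (vsm c x) = c \<otimes> c \<otimes> Q x"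
  by (simp add: Q_dot Av_sm dot_sm_l dot_sm_r m_assoc)

lemma Q_closed[simp]: "x \<in> V \<Longrightarrow> Q x \<in> carrier R" by (simp add: Q_dot)

lemma Q_neg: "x \<in> V \<Longrightarrow> Q (vneg x) = Q x"
  unfolding vneg_def by (simp add: Q_sm r5)

end


context sq_setup begin

definition G where "G t = (\<Sum>x\<in>V. \<chi> (t \<otimes> Q x))"
definition g1 where "g1 c = (\<Sum>v\<in>carrier R. \<chi> (c \<otimes> v \<otimes> v))"

lemma two_c[simp]: "\<one> \<oplus> \<one> \<in> carrier R" by simp

lemma nz_mult: "a \<in> carrier R \<Longrightarrow> b \<in> carrier R \<Longrightarrow> a \<noteq> \<zero> \<Longrightarrow> b \<noteq> \<zero> \<Longrightarrow> a \<otimes> b \<noteq> \<zero>"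
  using integral_iff by blast

lemma vsm_vsm: "a \<in> carrier R \<Longrightarrow> b \<in> carrier R \<Longrightarrow> x \<in> V \<Longrightarrow> vsm a (vsm b x) = vsm (a \<otimes> b) x"
  by (rule V_ext) (auto simp: V_comp m_assoc)
lemma vsm_one: "x \<in> V \<Longrightarrow> vsm \<one> x = x" by (rule V_ext) (auto simp: V_comp)
lemma vsm_vz: "a \<in> carrier R \<Longrightarrow> vsm a vz = vz" by (rule V_ext) auto

lemma vsm_eq_vz: assumes a: "a \<in> carrier R" "a \<noteq> \<zero>" and x: "x \<in> V" and e: "vsm a x = vz"
  shows "x = vz"
proof -
  have aU: "a \<in> Units R" using a field_Units by blast
  have iu: "inv a \<in> carrier R" "inv a \<otimes> a = \<one>" using aU by auto
  have "x = vsm (inv a) (vsm a x)" using iu a x by (simp add: vsm_vsm vsm_one)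
  also have "\<dots> = vz" using e aU by (simp add: vsm_vz)
  finally show ?thesis .
qed

lemma cmod_sq: "(cmod z)^2 = Re (z * cnj z)"
  by (simp add: complex_mult_cnj cmod_power2)

lemma ring_id1: "t \<in> carrier R \<Longrightarrow> a \<in> carrier R \<Longrightarrow> b \<in> carrier R \<Longrightarrow> e \<in> carrier R \<Longrightarrow>
   t \<otimes> (a \<oplus> b \<oplus> (\<one> \<oplus> \<one>) \<otimes> e) \<oplus> \<ominus> (t \<otimes> a) = t \<otimes> b \<oplus> (t \<otimes> (\<one> \<oplus> \<one>)) \<otimes> e" by algebra

lemma r6: "a \<in> carrier R \<Longrightarrow> b \<in> carrier R \<Longrightarrow> b \<oplus> (a \<oplus> \<ominus> \<one> \<otimes> b) = a" by algebra
lemma r7: "a \<in> carrier R \<Longrightarrow> b \<in> carrier R \<Longrightarrow> b \<oplus> a \<oplus> \<ominus> \<one> \<otimes> b = a" by algebra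
lemma cancel3: "a \<in> V \<Longrightarrow> y \<in> V \<Longrightarrow> vadd y (vadd a (vneg y)) = a"
  by (rule V_ext) (auto simp: V_comp r6)
lemma cancel4: "a \<in> V \<Longrightarrow> y \<in> V \<Longrightarrow> vadd (vadd y a) (vneg y) = a"
  by (rule V_ext) (auto simp: V_comp r7)

lemma vz_Q: "Q vz = \<zero>" by (simp add: Q_dot Av_z)

lemma G_sq: assumes t: "t \<in> carrier R" "t \<noteq> \<zero>" shows "G t * cnj (G t) = of_nat (q ^ d)"
proof -
  define c where "c = t \<otimes> (\<one> \<oplus> \<one>)"
  have c: "c \<in> carrier R" "c \<noteq> \<zero>" using t two by (auto simp: c_def nz_mult)
  have "G t * cnj (G t) = (\<Sum>x\<in>V. \<Sum>y\<in>V. \<chi> (t \<otimes> Q x) * \<chi> (\<ominus> (t \<otimes> Q y)))"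
    by (simp add: G_def cnj_sum sum_product chi_cnj t)
  also have "\<dots> = (\<Sum>y\<in>V. \<Sum>x\<in>V. \<chi> (t \<otimes> Q x) * \<chi> (\<ominus> (t \<otimes> Q y)))" by (rule sum.swap)
  also have "\<dots> = (\<Sum>y\<in>V. \<Sum>h\<in>V. \<chi> (t \<otimes> Q h) * \<chi> (dot y (vsm c (Av h))))"
  proof (rule sum.cong[OF refl])
    fix y assume y: "y \<in> V"
    have "(\<Sum>x\<in>V. \<chi> (t \<otimes> Q x) * \<chi> (\<ominus> (t \<otimes> Q y))) = (\<Sum>h\<in>V. \<chi> (t \<otimes> Q (vadd y h)) * \<chi> (\<ominus> (t \<otimes> Q y)))"
      by (rule sum.reindex_bij_witness[where i="\<lambda>h. vadd y h" and j="\<lambda>x. vadd x (vneg y)"])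
         (auto simp: y cancel3 cancel4)
    also have "\<dots> = (\<Sum>h\<in>V. \<chi> (t \<otimes> Q h) * \<chi> (dot y (vsm c (Av h))))"
    proof (rule sum.cong[OF refl])
      fix h assume h: "h \<in> V"
      have "\<chi> (t \<otimes> Q (vadd y h)) * \<chi> (\<ominus> (t \<otimes> Q y)) = \<chi> (t \<otimes> Q (vadd y h) \<oplus> \<ominus> (t \<otimes> Q y))"
        using y h t by (simp add: chi_add)
      also have "\<dots> = \<chi> (t \<otimes> Q h \<oplus> c \<otimes> dot y (Av h))"
        using y h t by (simp add: Q_add ring_id1 c_def)
      also have "\<dots> = \<chi> (t \<otimes> Q h) * \<chi> (dot y (vsm c (Av h)))"
        using y h t c by (simp add: chi_add dot_sm_r)
      finally show "\<chi> (t \<otimes> Q (vadd y h)) * \<chi> (\<ominus> (t \<otimes> Q y)) = \<chi> (t \<otimes> Q h) * \<chi> (dot y (vsm c (Av h)))" .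
    qed
    finally show "(\<Sum>x\<in>V. \<chi> (t \<otimes> Q x) * \<chi> (\<ominus> (t \<otimes> Q y))) = (\<Sum>h\<in>V. \<chi> (t \<otimes> Q h) * \<chi> (dot y (vsm c (Av h))))" .
  qed
  also have "\<dots> = (\<Sum>h\<in>V. \<chi> (t \<otimes> Q h) * (\<Sum>y\<in>V. \<chi> (dot y (vsm c (Av h)))))"
    by (subst sum.swap) (simp add: sum_distrib_left)
  also have "\<dots> = (\<Sum>h\<in>V. if h = vz then of_nat (q ^ d) else 0)"
  proof (rule sum.cong[OF refl])
    fix h assume h: "h \<in> V"
    have iff: "vsm c (Av h) = vz \<longleftrightarrow> h = vz"
      using vsm_eq_vz[OF c, of "Av h"] Av_inj[OF h] h c by (auto simp: Av_z vsm_vz)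
    show "\<chi> (t \<otimes> Q h) * (\<Sum>y\<in>V. \<chi> (dot y (vsm c (Av h)))) = (if h = vz then of_nat (q ^ d) else 0)"
      using h c t by (simp add: orth_vec iff vz_Q chi0)
  qed
  also have "\<dots> = of_nat (q ^ d)" by (simp add: V_fin)
  finally show ?thesis .
qed

lemma g1_sq: assumes c: "c \<in> carrier R" "c \<noteq> \<zero>" shows "g1 c * cnj (g1 c) = of_nat q"
proof -
  define e where "e = c \<otimes> (\<one> \<oplus> \<one>)"
  have e: "e \<in> carrier R" "e \<noteq> \<zero>" using c two by (auto simp: e_def nz_mult)
  have ri: "c \<otimes> (w \<oplus> h) \<otimes> (w \<oplus> h) \<oplus> \<ominus> (c \<otimes> w \<otimes> w) = c \<otimes> h \<otimes> h \<oplus> (e \<otimes> h) \<otimes> w"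
    if "w \<in> carrier R" "h \<in> carrier R" for w h using that c by (simp add: e_def) algebra
  have "g1 c * cnj (g1 c) = (\<Sum>v\<in>carrier R. \<Sum>w\<in>carrier R. \<chi> (c \<otimes> v \<otimes> v) * \<chi> (\<ominus> (c \<otimes> w \<otimes> w)))"
    by (simp add: g1_def cnj_sum sum_product chi_cnj c)
  also have "\<dots> = (\<Sum>w\<in>carrier R. \<Sum>v\<in>carrier R. \<chi> (c \<otimes> v \<otimes> v) * \<chi> (\<ominus> (c \<otimes> w \<otimes> w)))" by (rule sum.swap)
  also have "\<dots> = (\<Sum>w\<in>carrier R. \<Sum>h\<in>carrier R. \<chi> (c \<otimes> h \<otimes> h) * \<chi> ((e \<otimes> h) \<otimes> w))"
  proof (rule sum.cong[OF refl])
    fix w assume w: "w \<in> carrier R"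
    have "(\<Sum>v\<in>carrier R. \<chi> (c \<otimes> v \<otimes> v) * \<chi> (\<ominus> (c \<otimes> w \<otimes> w))) = (\<Sum>h\<in>carrier R. \<chi> (c \<otimes> (w \<oplus> h) \<otimes> (w \<oplus> h)) * \<chi> (\<ominus> (c \<otimes> w \<otimes> w)))"
      by (rule sum.reindex_bij_witness[where i="\<lambda>h. w \<oplus> h" and j="\<lambda>v. v \<ominus> w"])
         (use w in \<open>auto simp: a_minus_def, algebra+\<close>)
    also have "\<dots> = (\<Sum>h\<in>carrier R. \<chi> (c \<otimes> h \<otimes> h) * \<chi> ((e \<otimes> h) \<otimes> w))"
      using w c e by (intro sum.cong refl) (simp add: chi_add[symmetric] ri)
    finally show "(\<Sum>v\<in>carrier R. \<chi> (c \<otimes> v \<otimes> v) * \<chi> (\<ominus> (c \<otimes> w \<otimes> w))) = (\<Sum>h\<in>carrier R. \<chi> (c \<otimes> h \<otimes> h) * \<chi> ((e \<otimes> h) \<otimes> w))" .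
  qed
  also have "\<dots> = (\<Sum>h\<in>carrier R. \<chi> (c \<otimes> h \<otimes> h) * (\<Sum>w\<in>carrier R. \<chi> ((e \<otimes> h) \<otimes> w)))"
    by (subst sum.swap) (simp add: sum_distrib_left)
  also have "\<dots> = (\<Sum>h\<in>carrier R. if h = \<zero> then of_nat q else 0)"
  proof (rule sum.cong[OF refl])
    fix h assume h: "h \<in> carrier R"
    have iff: "e \<otimes> h = \<zero> \<longleftrightarrow> h = \<zero>" using e h integral_iff by auto
    show "\<chi> (c \<otimes> h \<otimes> h) * (\<Sum>w\<in>carrier R. \<chi> ((e \<otimes> h) \<otimes> w)) = (if h = \<zero> then of_nat q else 0)"
      using h c e by (simp add: orth1 iff chi0)
  qed
  also have "\<dots> = of_nat q" by (simp add: fin)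
  finally show ?thesis .
qed

lemma G_scale: assumes t: "t \<in> carrier R" and u: "u \<in> carrier R" "u \<noteq> \<zero>"
  shows "G (t \<otimes> u \<otimes> u) = G t"
proof -
  have uU: "u \<in> Units R" using u field_Units by blast
  have iu: "inv u \<in> carrier R" "inv u \<otimes> u = \<one>" "u \<otimes> inv u = \<one>" using uU by auto
  have "G t = (\<Sum>x\<in>V. \<chi> (t \<otimes> Q (vsm u x)))"
    unfolding G_def
    by (rule sum.reindex_bij_witness[where i="\<lambda>x. vsm u x" and j="\<lambda>x. vsm (inv u) x"])
       (use iu u in \<open>auto simp: vsm_vsm vsm_one\<close>)
  also have "\<dots> = G (t \<otimes> u \<otimes> u)" unfolding G_def
    using t u by (intro sum.cong refl) (simp add: Q_sm m_assoc)
  finally show ?thesis by simp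
qed

end


context sq_setup begin

abbreviation "S \<equiv> sphere_set R d A j"
abbreviation "Cs \<equiv> carrier R - {\<zero>}"

lemma S_sub: "S \<subseteq> V" by (auto simp: sphere_set_def V_def)
lemma S_fin: "finite S" using V_fin S_sub finite_subset by blast
lemma S_iff: "x \<in> S \<longleftrightarrow> x \<in> V \<and> Q x = j" by (simp add: sphere_set_def V_def)

lemma minus_zero_iff: "a \<in> carrier R \<Longrightarrow> b \<in> carrier R \<Longrightarrow> a \<ominus> b = \<zero> \<longleftrightarrow> a = b"
proof
  assume ab: "a \<in> carrier R" "b \<in> carrier R" "a \<ominus> b = \<zero>"
  have "a = (a \<ominus> b) \<oplus> b" using ab(1,2) by algebra
  then show "a = b" using ab by simp
qed (auto simp: a_minus_def r_neg)

lemma r8: assumes "b \<in> carrier R" "u \<in> carrier R" "v \<in> carrier R" "u \<otimes> v = \<one>"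
  shows "b \<otimes> u \<otimes> u \<otimes> v \<otimes> v = b" "b \<otimes> v \<otimes> v \<otimes> u \<otimes> u = b"
proof -
  have "b \<otimes> u \<otimes> u \<otimes> v \<otimes> v = b \<otimes> (u \<otimes> v) \<otimes> (u \<otimes> v)"
    "b \<otimes> v \<otimes> v \<otimes> u \<otimes> u = b \<otimes> (u \<otimes> v) \<otimes> (u \<otimes> v)" using assms(1-3) by algebra+
  then show "b \<otimes> u \<otimes> u \<otimes> v \<otimes> v = b" "b \<otimes> v \<otimes> v \<otimes> u \<otimes> u = b" using assms by simp_all
qed

lemma inv_Cs: assumes a: "a \<in> Cs" shows "inv a \<in> Cs" "inv a \<otimes> a = \<one>" "a \<otimes> inv a = \<one>" "inv (inv a) = a"
proof -
  have aU: "a \<in> Units R" using a field_Units by blast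
  show i: "inv a \<otimes> a = \<one>" "a \<otimes> inv a = \<one>" "inv (inv a) = a" using aU by auto
  have ic: "inv a \<in> carrier R" using aU by auto
  moreover have "inv a \<noteq> \<zero>"
  proof
    assume "inv a = \<zero>"
    then have "inv a \<otimes> a = \<zero>" using a by simp
    with i show False by simp
  qed
  ultimately show "inv a \<in> Cs" by simp
qed

lemma q_ge3: "q \<ge> 3"
proof -
  have "\<one> \<oplus> \<one> \<noteq> \<one>"
  proof
    assume "\<one> \<oplus> \<one> = \<one>"
    then have "\<one> = \<zero>" by (metis add.r_cancel_one' one_closed)
    then show False by simp
  qed
  then have "card {\<zero>, \<one>, \<one> \<oplus> \<one>} = 3" using two by (auto simp: card_insert_if)
  moreover have "{\<zero>, \<one>, \<one> \<oplus> \<one>} \<subseteq> carrier R" by auto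
  ultimately show ?thesis by (metis card_mono fin)
qed

lemma count_S:
  "of_nat q * of_nat (card S) = of_nat (q ^ d) + (\<Sum>t\<in>Cs. \<chi> (\<ominus> (t \<otimes> j)) * G t)"
proof -
  have "(\<Sum>x\<in>V. \<Sum>t\<in>carrier R. \<chi> ((Q x \<ominus> j) \<otimes> t)) = (\<Sum>x\<in>V. if Q x = j then of_nat q else 0)"
    using jc by (intro sum.cong refl) (simp add: orth1 minus_zero_iff)
  also have "\<dots> = of_nat q * of_nat (card S)"
    using sum.inter_filter[OF V_fin, of "\<lambda>x. of_nat q :: complex" "\<lambda>x. Q x = j", symmetric]
    by (simp add: sphere_set_def V_def mult.commute)
  finally have 1: "(\<Sum>x\<in>V. \<Sum>t\<in>carrier R. \<chi> ((Q x \<ominus> j) \<otimes> t)) = of_nat q * of_nat (card S)" .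
  have "(\<Sum>x\<in>V. \<Sum>t\<in>carrier R. \<chi> ((Q x \<ominus> j) \<otimes> t)) = (\<Sum>t\<in>carrier R. \<Sum>x\<in>V. \<chi> ((Q x \<ominus> j) \<otimes> t))"
    by (rule sum.swap)
  also have "\<dots> = (\<Sum>x\<in>V. \<chi> ((Q x \<ominus> j) \<otimes> \<zero>)) + (\<Sum>t\<in>Cs. \<Sum>x\<in>V. \<chi> ((Q x \<ominus> j) \<otimes> t))"
    by (subst sum.remove[of _ \<zero>]) (auto simp: fin)
  also have "\<dots> = of_nat (q ^ d) + (\<Sum>t\<in>Cs. \<chi> (\<ominus> (t \<otimes> j)) * G t)"
  proof -
    have a: "(\<Sum>x\<in>V. \<chi> ((Q x \<ominus> j) \<otimes> \<zero>)) = of_nat (q ^ d)" using jc by (simp add: chi0 V_card)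
    have b: "(\<Sum>x\<in>V. \<chi> ((Q x \<ominus> j) \<otimes> t)) = \<chi> (\<ominus> (t \<otimes> j)) * G t" if t: "t \<in> Cs" for t
    proof -
      have "(\<Sum>x\<in>V. \<chi> ((Q x \<ominus> j) \<otimes> t)) = (\<Sum>x\<in>V. \<chi> (\<ominus> (t \<otimes> j)) * \<chi> (t \<otimes> Q x))"
      proof (intro sum.cong refl)
        fix x assume x: "x \<in> V"
        have "(Q x \<ominus> j) \<otimes> t = \<ominus> (t \<otimes> j) \<oplus> t \<otimes> Q x" using Q_closed[OF x] DiffD1[OF t] jc by algebra
        then show "\<chi> ((Q x \<ominus> j) \<otimes> t) = \<chi> (\<ominus> (t \<otimes> j)) * \<chi> (t \<otimes> Q x)" using x t jc by (simp add: chi_add)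
      qed
      then show ?thesis by (simp add: G_def sum_distrib_left)
    qed
    show ?thesis using a b by simp
  qed
  finally show ?thesis using 1 by simp
qed

lemma avg: "of_nat (q - 1) * (\<Sum>t\<in>Cs. \<chi> (\<ominus> (t \<otimes> j)) * G t) = (\<Sum>s\<in>Cs. G s * (g1 (\<ominus> (s \<otimes> j)) - 1))"
proof -
  let ?E = "\<Sum>t\<in>Cs. \<chi> (\<ominus> (t \<otimes> j)) * G t"
  have cardCs: "card Cs = q - 1" using fin by (simp add: card_Diff_singleton)
  have step: "?E = (\<Sum>s\<in>Cs. \<chi> (\<ominus> (s \<otimes> inv u \<otimes> inv u \<otimes> j)) * G s)" if u: "u \<in> Cs" for u
  proof -
    have iu: "inv u \<in> carrier R" "inv u \<otimes> u = \<one>" "u \<otimes> inv u = \<one>" "inv u \<noteq> \<zero>" using inv_Cs[OF u] by auto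
    have "?E = (\<Sum>t\<in>Cs. \<chi> (\<ominus> (t \<otimes> j)) * G (t \<otimes> u \<otimes> u))"
      using u by (intro sum.cong refl) (simp add: G_scale)
    also have "\<dots> = (\<Sum>s\<in>Cs. \<chi> (\<ominus> (s \<otimes> inv u \<otimes> inv u \<otimes> j)) * G s)"
    proof (rule sum.reindex_bij_witness[where i="\<lambda>s. s \<otimes> inv u \<otimes> inv u" and j="\<lambda>t. t \<otimes> u \<otimes> u"])
      fix a assume a: "a \<in> Cs"
      show "a \<otimes> u \<otimes> u \<otimes> inv u \<otimes> inv u = a" using a u iu r8 by simp
      show "a \<otimes> u \<otimes> u \<in> Cs" using a u by (auto simp: nz_mult)
      show "\<chi> (\<ominus> (a \<otimes> u \<otimes> u \<otimes> inv u \<otimes> inv u \<otimes> j)) * G (a \<otimes> u \<otimes> u) = \<chi> (\<ominus> (a \<otimes> j)) * G (a \<otimes> u \<otimes> u)"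
      proof -
        have "a \<otimes> u \<otimes> u \<otimes> inv u \<otimes> inv u = a" using a u iu r8 by simp
        then show ?thesis by simp
      qed
    next
      fix b assume b: "b \<in> Cs"
      show "b \<otimes> inv u \<otimes> inv u \<otimes> u \<otimes> u = b" using b u iu r8 by simp
      show "b \<otimes> inv u \<otimes> inv u \<in> Cs" using b iu by (auto simp: nz_mult)
    qed
    finally show ?thesis .
  qed
  have "of_nat (q - 1) * ?E = (\<Sum>u\<in>Cs. ?E)" using cardCs by simp
  also have "\<dots> = (\<Sum>u\<in>Cs. \<Sum>s\<in>Cs. \<chi> (\<ominus> (s \<otimes> inv u \<otimes> inv u \<otimes> j)) * G s)"
    by (rule sum.cong[OF refl], rule step)
  also have "\<dots> = (\<Sum>s\<in>Cs. G s * (\<Sum>u\<in>Cs. \<chi> (\<ominus> (s \<otimes> inv u \<otimes> inv u \<otimes> j))))"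
    by (subst sum.swap) (simp add: sum_distrib_left mult.commute)
  also have "\<dots> = (\<Sum>s\<in>Cs. G s * (g1 (\<ominus> (s \<otimes> j)) - 1))"
  proof (intro sum.cong refl arg_cong[where f="\<lambda>z. G _ * z"])
    fix s assume s: "s \<in> Cs"
    have "(\<Sum>u\<in>Cs. \<chi> (\<ominus> (s \<otimes> inv u \<otimes> inv u \<otimes> j))) = (\<Sum>v\<in>Cs. \<chi> (\<ominus> (s \<otimes> j) \<otimes> v \<otimes> v))"
    proof (rule sum.reindex_bij_witness[where i="\<lambda>v. inv v" and j="\<lambda>u. inv u"])
      fix a assume a: "a \<in> Cs"
      show "inv (inv a) = a" using inv_Cs[OF a] by simp
      show "inv a \<in> Cs" using inv_Cs[OF a] by simp
      show "\<chi> (\<ominus> (s \<otimes> j) \<otimes> inv a \<otimes> inv a) = \<chi> (\<ominus> (s \<otimes> inv a \<otimes> inv a \<otimes> j))"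
      proof -
        have "inv a \<in> carrier R" using inv_Cs[OF a] by simp
        then have "\<ominus> (s \<otimes> j) \<otimes> inv a \<otimes> inv a = \<ominus> (s \<otimes> inv a \<otimes> inv a \<otimes> j)" using s jc by simp algebra
        then show ?thesis by simp
      qed
    next
      fix b assume b: "b \<in> Cs"
      show "inv (inv b) = b" using inv_Cs[OF b] by simp
      show "inv b \<in> Cs" using inv_Cs[OF b] by simp
    qed
    also have "\<dots> = g1 (\<ominus> (s \<otimes> j)) - 1"
      unfolding g1_def using s jc by (subst sum.remove[of _ \<zero>]) (auto simp: fin chi0)
    finally show "(\<Sum>u\<in>Cs. \<chi> (\<ominus> (s \<otimes> inv u \<otimes> inv u \<otimes> j))) = g1 (\<ominus> (s \<otimes> j)) - 1" .
  qed
  finally show ?thesis .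
qed

end


context sq_setup begin

lemma G_norm: "t \<in> Cs \<Longrightarrow> cmod (G t) = sqrt (real q) ^ d"
  by (simp add: complex_mod_sqrt_Re_mult_cnj G_sq real_sqrt_power)

lemma g1_norm: "c \<in> Cs \<Longrightarrow> cmod (g1 c) = sqrt (real q)"
  by (simp add: complex_mod_sqrt_Re_mult_cnj g1_sq)

lemma E_bound: "cmod (\<Sum>t\<in>Cs. \<chi> (\<ominus> (t \<otimes> j)) * G t) \<le> sqrt (real q) ^ d * (sqrt (real q) + 1)"
proof -
  let ?E = "\<Sum>t\<in>Cs. \<chi> (\<ominus> (t \<otimes> j)) * G t"
  have q1: "real (q - 1) > 0" using q_ge3 by simp
  have "real (q - 1) * cmod ?E = cmod (of_nat (q - 1) * ?E)" by (simp add: norm_mult)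
  also have "\<dots> = cmod (\<Sum>s\<in>Cs. G s * (g1 (\<ominus> (s \<otimes> j)) - 1))" by (simp only: avg)
  also have "\<dots> \<le> (\<Sum>s\<in>Cs. cmod (G s * (g1 (\<ominus> (s \<otimes> j)) - 1)))" by (rule norm_sum)
  also have "\<dots> \<le> (\<Sum>s\<in>Cs. sqrt (real q) ^ d * (sqrt (real q) + 1))"
  proof (rule sum_mono)
    fix s assume s: "s \<in> Cs"
    have c: "\<ominus> (s \<otimes> j) \<in> Cs" using s jc j0 nz_mult[of s j] by auto
    have "cmod (g1 (\<ominus> (s \<otimes> j)) - 1) \<le> cmod (g1 (\<ominus> (s \<otimes> j))) + cmod (1::complex)"
      by (rule norm_triangle_ineq4)
    then have "cmod (g1 (\<ominus> (s \<otimes> j)) - 1) \<le> sqrt (real q) + 1" using g1_norm[OF c] by simp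
    then show "cmod (G s * (g1 (\<ominus> (s \<otimes> j)) - 1)) \<le> sqrt (real q) ^ d * (sqrt (real q) + 1)"
      by (simp add: norm_mult G_norm[OF s] mult_left_mono)
  qed
  also have "\<dots> = real (q - 1) * (sqrt (real q) ^ d * (sqrt (real q) + 1))"
    using fin by (simp add: card_Diff_singleton)
  finally show ?thesis using q1 by simp
qed

lemma S_lower: "real q ^ d \<le> 20 * (real q * real (card S))"
proof -
  let ?E = "\<Sum>t\<in>Cs. \<chi> (\<ominus> (t \<otimes> j)) * G t"
  define s where "s = sqrt (real q)"
  have s0: "s \<ge> 0" by (simp add: s_def)
  have ss: "s * s = real q" by (simp add: s_def)
  have s3: "s * s \<ge> 3" using ss q_ge3 by simp
  have s17: "s \<ge> 17/10"
  proof (rule ccontr)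
    assume "\<not> ?thesis"
    then have "s < 17/10" by simp
    then have "s * s < 17/10 * (17/10)" using s0 by (intro mult_strict_mono) auto
    then show False using s3 by simp
  qed
  have key: "s + 1 \<le> 19/20 * (s * s)"
  proof -
    have "0 \<le> (s - 17/10) * (19/20 * s + 123/200)" using s17 s0 by simp
    moreover have "(s - 17/10) * (19/20 * s + 123/200) = 19/20 * (s * s) - s - 1 - 91/2000"
      by (simp add: field_simps)
    ultimately show ?thesis by linarith
  qed
  have sd: "s * s \<le> s ^ d"
  proof -
    have "s ^ 2 \<le> s ^ d" using d2 s17 by (intro power_increasing) auto
    then show ?thesis by (simp add: power2_eq_square)
  qed
  have qd: "real q ^ d = s ^ d * s ^ d" using ss by (metis power_mult_distrib)
  have "of_nat q * of_nat (card S) = (of_nat (q ^ d) + ?E :: complex)" by (rule count_S)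
  then have "real q * real (card S) = real (q ^ d) + Re ?E"
    by (metis Re_complex_of_real of_real_of_nat_eq of_real_mult plus_complex.sel(1))
  moreover have "Re ?E \<ge> - cmod ?E" using abs_Re_le_cmod[of ?E] by linarith
  moreover have "cmod ?E \<le> s ^ d * (s + 1)" using E_bound by (simp add: s_def)
  moreover have "s ^ d * (s + 1) \<le> s ^ d * (19/20 * (s ^ d))"
    using key sd s0 by (intro mult_left_mono) auto
  ultimately show ?thesis using qd by simp
qed

end


context sq_setup begin

lemma add_zero_neg: "a \<in> carrier R \<Longrightarrow> b \<in> carrier R \<Longrightarrow> a \<oplus> b = \<zero> \<Longrightarrow> a = \<ominus> b"
proof -
  assume ab: "a \<in> carrier R" "b \<in> carrier R" "a \<oplus> b = \<zero>"
  have "a = (a \<oplus> b) \<oplus> \<ominus> b" using ab(1,2) by algebra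
  then show ?thesis using ab by simp
qed

lemma roots2:
  assumes abc: "\<alpha> \<in> carrier R" "\<beta> \<in> carrier R" "\<gamma> \<in> carrier R"
    and nz: "\<not> (\<alpha> = \<zero> \<and> \<beta> = \<zero> \<and> \<gamma> = \<zero>)"
  shows "card {t \<in> carrier R. \<alpha> \<otimes> t \<otimes> t \<oplus> \<beta> \<otimes> t \<oplus> \<gamma> = \<zero>} \<le> 2"
proof -
  let ?Z = "{t \<in> carrier R. \<alpha> \<otimes> t \<otimes> t \<oplus> \<beta> \<otimes> t \<oplus> \<gamma> = \<zero>}"
  show ?thesis
  proof (cases "?Z = {}")
    case True then show ?thesis by (subst True) simp
  next
    case False
    then obtain t1 where t1: "t1 \<in> carrier R" "\<alpha> \<otimes> t1 \<otimes> t1 \<oplus> \<beta> \<otimes> t1 \<oplus> \<gamma> = \<zero>" by blast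
    show ?thesis
    proof (cases "\<alpha> = \<zero>")
      case False
      have aC: "\<alpha> \<in> Cs" using False abc by simp
      have "?Z \<subseteq> {t1, inv \<alpha> \<otimes> (\<ominus> \<beta>) \<ominus> t1}"
      proof
        fix t assume t: "t \<in> ?Z"
        then have tc: "t \<in> carrier R" and te: "\<alpha> \<otimes> t \<otimes> t \<oplus> \<beta> \<otimes> t \<oplus> \<gamma> = \<zero>" by auto
        have "(t \<ominus> t1) \<otimes> (\<alpha> \<otimes> (t \<oplus> t1) \<oplus> \<beta>) =
              (\<alpha> \<otimes> t \<otimes> t \<oplus> \<beta> \<otimes> t \<oplus> \<gamma>) \<ominus> (\<alpha> \<otimes> t1 \<otimes> t1 \<oplus> \<beta> \<otimes> t1 \<oplus> \<gamma>)"
          using tc t1(1) abc by algebra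
        also have "\<dots> = \<zero>" using te t1(2) by (simp add: a_minus_def)
        finally have "t \<ominus> t1 = \<zero> \<or> \<alpha> \<otimes> (t \<oplus> t1) \<oplus> \<beta> = \<zero>"
          using integral_iff tc t1(1) abc by auto
        then show "t \<in> {t1, inv \<alpha> \<otimes> (\<ominus> \<beta>) \<ominus> t1}"
        proof
          assume "t \<ominus> t1 = \<zero>" then show ?thesis using minus_zero_iff tc t1(1) by simp
        next
          assume "\<alpha> \<otimes> (t \<oplus> t1) \<oplus> \<beta> = \<zero>"
          then have e1: "\<alpha> \<otimes> (t \<oplus> t1) = \<ominus> \<beta>" using add_zero_neg tc t1(1) abc by simp
          have "t \<oplus> t1 = inv \<alpha> \<otimes> (\<alpha> \<otimes> (t \<oplus> t1))"
            using inv_Cs[OF aC] tc t1(1) abc by (simp add: m_assoc[symmetric])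
          also have "\<dots> = inv \<alpha> \<otimes> (\<ominus> \<beta>)" using e1 by simp
          finally have e2: "t \<oplus> t1 = inv \<alpha> \<otimes> (\<ominus> \<beta>)" .
          have "t = (t \<oplus> t1) \<ominus> t1" using tc t1(1) by algebra
          then show ?thesis using e2 by simp
        qed
      qed
      then have "card ?Z \<le> card {t1, inv \<alpha> \<otimes> (\<ominus> \<beta>) \<ominus> t1}" by (intro card_mono) auto
      moreover have "card {t1, inv \<alpha> \<otimes> (\<ominus> \<beta>) \<ominus> t1} \<le> 2" by (simp add: card_insert_if)
      ultimately show ?thesis by linarith
    next
      case True
      then have bg: "\<not> (\<beta> = \<zero> \<and> \<gamma> = \<zero>)" using nz by simp
      show ?thesis
      proof (cases "\<beta> = \<zero>")
        case True
        then have "?Z = {}" using bg abc \<open>\<alpha> = \<zero>\<close> by auto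
        then show ?thesis by (subst \<open>?Z = {}\<close>) simp
      next
        case False
        have bC: "\<beta> \<in> Cs" using False abc by simp
        have "?Z \<subseteq> {inv \<beta> \<otimes> (\<ominus> \<gamma>)}"
        proof
          fix t assume t: "t \<in> ?Z"
          then have tc: "t \<in> carrier R" and te: "\<beta> \<otimes> t \<oplus> \<gamma> = \<zero>" using \<open>\<alpha> = \<zero>\<close> abc by auto
          then have e1: "\<beta> \<otimes> t = \<ominus> \<gamma>" using add_zero_neg tc abc by simp
          have "t = inv \<beta> \<otimes> (\<beta> \<otimes> t)" using inv_Cs[OF bC] tc abc by (simp add: m_assoc[symmetric])
          then show "t \<in> {inv \<beta> \<otimes> (\<ominus> \<gamma>)}" using e1 by simp
        qed
        then have "card ?Z \<le> card {inv \<beta> \<otimes> (\<ominus> \<gamma>)}" by (intro card_mono) auto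
        then have "card ?Z \<le> 1" by simp
        then show ?thesis by simp
      qed
    qed
  qed
qed

end


context sq_setup begin

lemma dot_support: assumes u: "u \<in> V" and c: "c \<in> V" and r: "r < d"
  and z: "\<And>i. i < d \<Longrightarrow> i \<noteq> r \<Longrightarrow> u i = \<zero>"
  shows "dot u c = u r \<otimes> c r"
proof -
  have "dot u c = (\<Oplus>i\<in>{..<d}. if r = i then u i \<otimes> c i else \<zero>)"
    unfolding dotp_def using u c z by (intro finsum_cong') (auto simp: V_comp)
  also have "\<dots> = u r \<otimes> c r" using u c r by (intro finsum_singleton) (auto simp: V_comp)
  finally show ?thesis .
qed

lemma P_card: assumes c: "c \<in> V" and p: "p < d" and r: "r < d" "r \<noteq> p" and cr: "c r \<noteq> \<zero>"
  shows "card {y \<in> V. y p = \<zero> \<and> dot y c = k} \<le> q ^ (d - 2)"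
proof -
  let ?P = "{y \<in> V. y p = \<zero> \<and> dot y c = k}"
  let ?I = "{..<d} - {p, r}"
  have cI: "card ?I = d - 2" using p r by (subst card_Diff_subset) auto
  have inj: "inj_on (\<lambda>y. restrict y ?I) ?P"
  proof (rule inj_onI)
    fix y y' assume y: "y \<in> ?P" and y': "y' \<in> ?P" and e: "restrict y ?I = restrict y' ?I"
    have off: "y i = y' i" if "i < d" "i \<noteq> r" for i
    proof (cases "i = p")
      case True then show ?thesis using y y' by simp
    next
      case False
      then have "i \<in> ?I" using that by simp
      then show ?thesis using fun_cong[OF e, of i] by simp
    qed
    let ?u = "vadd y (vneg y')"
    have uV: "?u \<in> V" using y y' by simp
    have uz: "?u i = \<zero>" if "i < d" "i \<noteq> r" for i
      using off[OF that] that y' by (simp add: V_comp r3)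
    have "dot ?u c = dot y c \<oplus> \<ominus> dot y' c" using y y' c by (simp add: dot_add_l dot_neg_l)
    also have "\<dots> = \<zero>" using y y' c dot_closed[of y c] by (simp add: r_neg)
    finally have "?u r \<otimes> c r = \<zero>" using dot_support[OF uV c r(1) uz] by simp
    then have "?u r = \<zero>" using cr c r uV integral_iff V_comp by blast
    then have yr: "y r = y' r"
    proof -
      assume h: "?u r = \<zero>"
      have "y r \<oplus> \<ominus> \<one> \<otimes> y' r = \<zero>" using h r by simp
      moreover have "y r \<in> carrier R" "y' r \<in> carrier R" using y y' r V_comp by auto
      ultimately show ?thesis using minus_zero_iff[of "y r" "y' r"] by (simp add: a_minus_def l_minus)
    qed
    show "y = y'"
      using y y' by (intro V_ext) (auto, metis off yr)
  qed
  have sub: "(\<lambda>y. restrict y ?I) ` ?P \<subseteq> PiE ?I (\<lambda>_. carrier R)"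
  proof (rule image_subsetI)
    fix y assume "y \<in> ?P"
    then show "restrict y ?I \<in> PiE ?I (\<lambda>_. carrier R)" by (subst restrict_PiE_iff) (auto simp: V_comp)
  qed
  have "card ?P = card ((\<lambda>y. restrict y ?I) ` ?P)" using inj by (simp add: card_image)
  also have "\<dots> \<le> card (PiE ?I (\<lambda>_. carrier R))" using sub fin by (intro card_mono) (auto simp: finite_PiE)
  also have "\<dots> = q ^ (d - 2)" by (simp add: card_PiE cI)
  finally show ?thesis .
qed

lemma r9: "x \<in> carrier R \<Longrightarrow> a \<in> carrier R \<Longrightarrow> w \<in> carrier R \<Longrightarrow> x \<oplus> \<ominus> a \<otimes> w \<oplus> a \<otimes> w = x" by algebra

lemma line_count:
  assumes cV: "c \<in> V" and kc: "k \<in> carrier R" and wV: "w \<in> V" and p: "p < d" and wp: "w p \<noteq> \<zero>"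
    and r: "r < d" "r \<noteq> p" and cr: "c r \<noteq> \<zero>" and wc: "dot w c = \<zero>"
    and good: "\<And>y. y \<in> V \<Longrightarrow> dot y c = k \<Longrightarrow> Q w = \<zero> \<Longrightarrow> dot y (Av w) = \<zero> \<Longrightarrow> Q y \<noteq> j"
  shows "card {x \<in> V. Q x = j \<and> dot x c = k} \<le> 2 * q ^ (d - 2)"
proof -
  let ?T = "{x \<in> V. Q x = j \<and> dot x c = k}"
  let ?P = "{y \<in> V. y p = \<zero> \<and> dot y c = k}"
  have wpC: "w p \<in> Cs" using wp wV p V_comp by auto
  note iw = inv_Cs[OF wpC]
  define a where "a x = x p \<otimes> inv (w p)" for x
  define pr where "pr x = vadd x (vsm (\<ominus> a x) w)" for x
  have ac: "x \<in> V \<Longrightarrow> a x \<in> carrier R" for x using p iw by (simp add: a_def V_comp)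
  have prV: "x \<in> V \<Longrightarrow> pr x \<in> V" for x using ac wV by (simp add: pr_def)
  have prP: "pr x \<in> ?P" if x: "x \<in> ?T" for x
  proof -
    have xV: "x \<in> V" using x by simp
    have "pr x p = x p \<oplus> \<ominus> (x p \<otimes> inv (w p)) \<otimes> w p" using p by (simp add: pr_def a_def)
    also have "\<dots> = \<zero>"
    proof -
      have "x p \<oplus> \<ominus> (x p \<otimes> inv (w p)) \<otimes> w p = x p \<oplus> \<ominus> (x p \<otimes> (inv (w p) \<otimes> w p))"
        using iw V_comp[OF xV p] wpC by (simp add: m_assoc l_minus)
      then show ?thesis using iw V_comp[OF xV p] by (simp add: r_neg)
    qed
    finally have 1: "pr x p = \<zero>" .
    have "dot (pr x) c = dot x c \<oplus> \<ominus> a x \<otimes> dot w c"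
      using xV cV wV ac[OF xV] by (simp add: pr_def dot_add_l dot_sm_l)
    also have "\<dots> = k" using wc x ac[OF xV] kc by simp
    finally show ?thesis using 1 prV[OF xV] by simp
  qed
  have fib: "card {x \<in> ?T. pr x = y} \<le> 2" if y: "y \<in> ?P" for y
  proof -
    have yV: "y \<in> V" using y by simp
    define D where "D = dot y (Av w)"
    have Dc: "D \<in> carrier R" using yV wV by (simp add: D_def)
    let ?Z = "{t \<in> carrier R. Q w \<otimes> t \<otimes> t \<oplus> ((\<one> \<oplus> \<one>) \<otimes> D) \<otimes> t \<oplus> (Q y \<ominus> j) = \<zero>}"
    have Qline: "Q (vadd y (vsm t w)) = Q y \<oplus> t \<otimes> t \<otimes> Q w \<oplus> (\<one> \<oplus> \<one>) \<otimes> (t \<otimes> D)"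
      if t: "t \<in> carrier R" for t
      using yV wV t by (simp add: Q_add Q_sm Av_sm dot_sm_r D_def)
    have sub: "{x \<in> ?T. pr x = y} \<subseteq> (\<lambda>t. vadd y (vsm t w)) ` ?Z"
    proof
      fix x assume x: "x \<in> {x \<in> ?T. pr x = y}"
      then have xV: "x \<in> V" and xe: "pr x = y" and Qx: "Q x = j" by auto
      have xrep: "x = vadd y (vsm (a x) w)"
      proof (rule V_ext)
        fix i assume i: "i < d"
        show "x i = vadd y (vsm (a x) w) i"
          using i xV wV ac[OF xV] by (simp add: xe[symmetric] pr_def V_comp r9)
      qed (use xV yV wV ac[OF xV] in auto)
      have "Q w \<otimes> a x \<otimes> a x \<oplus> ((\<one> \<oplus> \<one>) \<otimes> D) \<otimes> a x \<oplus> (Q y \<ominus> j) =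
            (Q y \<oplus> a x \<otimes> a x \<otimes> Q w \<oplus> (\<one> \<oplus> \<one>) \<otimes> (a x \<otimes> D)) \<ominus> j"
        using ac[OF xV] Dc yV wV jc Q_closed[OF yV] Q_closed[OF wV] by algebra
      also have "\<dots> = Q x \<ominus> j" using Qline[OF ac[OF xV]] xrep by simp
      also have "\<dots> = \<zero>" using Qx jc by (simp add: a_minus_def r_neg)
      finally have "a x \<in> ?Z" using ac[OF xV] by simp
      then show "x \<in> (\<lambda>t. vadd y (vsm t w)) ` ?Z" using xrep by blast
    qed
    have nz: "\<not> (Q w = \<zero> \<and> (\<one> \<oplus> \<one>) \<otimes> D = \<zero> \<and> Q y \<ominus> j = \<zero>)"
    proof
      assume h: "Q w = \<zero> \<and> (\<one> \<oplus> \<one>) \<otimes> D = \<zero> \<and> Q y \<ominus> j = \<zero>"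
      then have "D = \<zero>" using integral_iff Dc two by auto
      moreover have "Q y = j" using h minus_zero_iff[of "Q y" j] jc yV by simp
      ultimately show False using good[OF yV] y h by (simp add: D_def)
    qed
    have "card {x \<in> ?T. pr x = y} \<le> card ((\<lambda>t. vadd y (vsm t w)) ` ?Z)"
      using sub fin by (intro card_mono) auto
    also have "\<dots> \<le> card ?Z" using fin by (intro card_image_le) auto
    also have "\<dots> \<le> 2" using nz Dc jc yV wV by (intro roots2) auto
    finally show ?thesis .
  qed
  have finP: "finite ?P" using V_fin by simp
  have "?T \<subseteq> (\<Union>y\<in>?P. {x \<in> ?T. pr x = y})" using prP by blast
  then have "card ?T \<le> card (\<Union>y\<in>?P. {x \<in> ?T. pr x = y})"
    using finP V_fin by (intro card_mono) auto
  also have "\<dots> \<le> (\<Sum>y\<in>?P. card {x \<in> ?T. pr x = y})" using finP by (rule card_UN_le)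
  also have "\<dots> \<le> (\<Sum>y\<in>?P. 2)" using fib by (intro sum_mono) auto
  also have "\<dots> = 2 * card ?P" by simp
  also have "\<dots> \<le> 2 * q ^ (d - 2)" using P_card[OF cV p r cr, of k] by simp
  finally show ?thesis .
qed

end


context sq_setup begin

definition wv where "wv c i0 m = vadd (vsm (c i0) (ev m)) (vsm (\<ominus> (c m)) (ev i0))"

lemma wv_V: "c \<in> V \<Longrightarrow> i0 < d \<Longrightarrow> m < d \<Longrightarrow> wv c i0 m \<in> V"
  by (simp add: wv_def V_comp)

lemma wv_comp: assumes c: "c \<in> V" "i0 < d" "m < d" "m \<noteq> i0" and i: "i < d"
  shows "wv c i0 m i = (if i = m then c i0 else if i = i0 then \<ominus> (c m) else \<zero>)"
  using assms by (auto simp: wv_def ev_def V_comp)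

lemma wv_dot: assumes c: "c \<in> V" "i0 < d" "m < d" "m \<noteq> i0" and u: "u \<in> V"
  shows "dot (wv c i0 m) u = c i0 \<otimes> u m \<oplus> \<ominus> (c m) \<otimes> u i0"
  using assms by (simp add: wv_def dot_add_l dot_sm_l dot_ev V_comp)

lemma wv_dot_c: assumes c: "c \<in> V" "i0 < d" "m < d" "m \<noteq> i0"
  shows "dot (wv c i0 m) c = \<zero>"
proof -
  have "c i0 \<otimes> c m \<oplus> \<ominus> (c m) \<otimes> c i0 = \<zero>" using V_comp[OF c(1) c(2)] V_comp[OF c(1) c(3)] by algebra
  then show ?thesis using wv_dot[OF c c(1)] by simp
qed

lemma perp_span: assumes c: "c \<in> V" "i0 < d" "c i0 \<noteq> \<zero>" and u: "u \<in> V"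
  and perp: "\<And>l. l < d \<Longrightarrow> l \<noteq> i0 \<Longrightarrow> dot (wv c i0 l) u = \<zero>"
  shows "u = vsm (u i0 \<otimes> inv (c i0)) c"
proof -
  have ciC: "c i0 \<in> Cs" using c V_comp by auto
  note ic = inv_Cs[OF ciC]
  have ui0: "u i0 \<in> carrier R" using u c V_comp by auto
  show ?thesis
  proof (rule V_ext)
  fix l assume l: "l < d"
  show "u l = vsm (u i0 \<otimes> inv (c i0)) c l"
  proof (cases "l = i0")
    case True
    then show ?thesis using l ic ui0 V_comp[OF c(1) l] by (simp add: m_assoc)
  next
    case False
    have e: "c i0 \<otimes> u l \<oplus> \<ominus> (c l) \<otimes> u i0 = \<zero>" using perp[OF l False] wv_dot[OF c(1,2) l False u] by simp
    have ulc: "u l \<in> carrier R" "c l \<in> carrier R" using u c l V_comp by auto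
    have "c i0 \<otimes> u l = \<ominus> (\<ominus> (c l) \<otimes> u i0)" using add_zero_neg[OF _ _ e] ulc ui0 V_comp[OF c(1,2)] by simp
    also have "\<dots> = c l \<otimes> u i0" using ulc ui0 by algebra
    finally have e2: "c i0 \<otimes> u l = c l \<otimes> u i0" .
    have "u l = inv (c i0) \<otimes> (c i0 \<otimes> u l)" using ic ulc V_comp[OF c(1,2)] by (simp add: m_assoc[symmetric])
    also have "\<dots> = inv (c i0) \<otimes> (c l \<otimes> u i0)" using e2 by simp
    also have "\<dots> = u i0 \<otimes> inv (c i0) \<otimes> c l" using ic ulc ui0 by (simp add: m_ac)
    finally show ?thesis using l by simp
  qed
qed (use u c ic ui0 in auto)
qed

lemma polar: assumes a: "a \<in> V" and b: "b \<in> V" and Qa: "Q a = \<zero>" and Qb: "Q b = \<zero>" and Qab: "Q (vadd a b) = \<zero>"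
  shows "dot a (Av b) = \<zero>"
proof -
  have "(\<one> \<oplus> \<one>) \<otimes> dot a (Av b) = \<zero>" using Q_add[OF a b] Qa Qb Qab a b by simp
  then show ?thesis using integral_iff two a b by auto
qed

end


context sq_setup begin

lemma vneg_Av: "x \<in> V \<Longrightarrow> Av (vneg x) = vneg (Av x)"
  by (simp add: vneg_def Av_sm)

lemma vsub_z: assumes "a \<in> V" "b \<in> V" "vadd a (vneg b) = vz" shows "a = b"
proof -
  have "a = vadd (vadd a (vneg b)) b" using assms(1,2) by (simp add: cancel2)
  also have "\<dots> = b" using assms by (simp add: vadd_comm[of vz b] vadd_z)
  finally show ?thesis .
qed

lemma good_d3: assumes d3: "3 \<le> d" and z: "z \<in> V" "z \<noteq> vz" and i0: "i0 < d" "Av z i0 \<noteq> \<zero>"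
  shows "\<exists>w p. w \<in> V \<and> p < d \<and> p \<noteq> i0 \<and> w p \<noteq> \<zero> \<and> dot w (Av z) = \<zero> \<and> Q w \<noteq> \<zero>"
proof (rule ccontr)
  assume na: "\<not> ?thesis"
  define c where "c = Av z"
  have cV: "c \<in> V" using z by (simp add: c_def)
  have ci0: "c i0 \<noteq> \<zero>" "c i0 \<in> carrier R" using i0 cV V_comp by (auto simp: c_def)
  have Qw: "Q (wv c i0 m) = \<zero>" if m: "m < d" "m \<noteq> i0" for m
  proof (rule ccontr)
    assume "Q (wv c i0 m) \<noteq> \<zero>"
    then have "\<exists>w p. w \<in> V \<and> p < d \<and> p \<noteq> i0 \<and> w p \<noteq> \<zero> \<and> dot w (Av z) = \<zero> \<and> Q w \<noteq> \<zero>"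
      using wv_V[OF cV i0(1) m(1)] m wv_comp[OF cV i0(1) m m(1)] ci0 wv_dot_c[OF cV i0(1) m]
      by (intro exI[of _ "wv c i0 m"] exI[of _ m]) (auto simp: c_def)
    then show False using na by blast
  qed
  have Qww: "Q (vadd (wv c i0 m) (wv c i0 l)) = \<zero>" if m: "m < d" "m \<noteq> i0" and l: "l < d" "l \<noteq> i0" "l \<noteq> m" for m l
  proof -
    have V1: "vadd (wv c i0 m) (wv c i0 l) \<in> V" using wv_V cV i0 m l by simp
    have h1: "vadd (wv c i0 m) (wv c i0 l) m = c i0"
      using m l wv_comp[OF cV i0(1) m m(1)] wv_comp[OF cV i0(1) l(1,2) m(1)] ci0 by simp
    have h2: "dot (vadd (wv c i0 m) (wv c i0 l)) (Av z) = \<zero>"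
      using wv_dot_c[OF cV i0(1) m] wv_dot_c[OF cV i0(1) l(1,2)] wv_V cV i0 m l
      by (simp add: dot_add_l c_def)
    show ?thesis
    proof (rule ccontr)
      assume h3: "Q (vadd (wv c i0 m) (wv c i0 l)) \<noteq> \<zero>"
      have "vadd (wv c i0 m) (wv c i0 l) \<in> V \<and> m < d \<and> m \<noteq> i0 \<and> vadd (wv c i0 m) (wv c i0 l) m \<noteq> \<zero>
         \<and> dot (vadd (wv c i0 m) (wv c i0 l)) (Av z) = \<zero> \<and> Q (vadd (wv c i0 m) (wv c i0 l)) \<noteq> \<zero>"
        using h1 h2 h3 V1 m ci0 by simp
      then show False using na by blast
    qed
  qed
  have B0: "dot (wv c i0 m) (Av (wv c i0 l)) = \<zero>" if m: "m < d" "m \<noteq> i0" and l: "l < d" "l \<noteq> i0" for m l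
  proof (cases "m = l")
    case True then show ?thesis using Qw[OF m] wv_V[OF cV i0(1) m(1)] by (simp add: Q_dot)
  next
    case False
    then show ?thesis using polar[OF wv_V[OF cV i0(1) m(1)] wv_V[OF cV i0(1) l(1)] Qw[OF m] Qw[OF l] Qww[OF m l]] by auto
  qed
  have par: "\<exists>lam\<in>carrier R. wv c i0 l = vsm lam z" if l: "l < d" "l \<noteq> i0" for l
  proof -
    let ?u = "Av (wv c i0 l)"
    have uV: "?u \<in> V" using wv_V[OF cV i0(1) l(1)] by simp
    define lam where "lam = ?u i0 \<otimes> inv (c i0)"
    have lc: "lam \<in> carrier R" using inv_Cs[of "c i0"] ci0 uV i0 V_comp by (simp add: lam_def)
    have "?u = vsm lam c" unfolding lam_def
      using perp_span[OF cV i0(1) ci0(1) uV] B0[OF _ _ l] by blast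
    then have "Av (vadd (wv c i0 l) (vneg (vsm lam z))) = vz"
      using z lc wv_V[OF cV i0(1) l(1)] by (simp add: Av_add vneg_Av Av_sm vadd_neg_z c_def)
    then have "vadd (wv c i0 l) (vneg (vsm lam z)) = vz" using Av_inj z lc wv_V[OF cV i0(1) l(1)] by simp
    then have "wv c i0 l = vsm lam z" using vsub_z z lc wv_V[OF cV i0(1) l(1)] by simp
    then show ?thesis using lc by blast
  qed
  define k1 where "k1 = (if i0 = 0 then 1 else (0::nat))"
  define k2 where "k2 = (if i0 = 2 then 1 else (2::nat))"
  have k: "k1 < d" "k1 \<noteq> i0" "k2 < d" "k2 \<noteq> i0" "k1 \<noteq> k2" using d3 by (auto simp: k1_def k2_def)
  obtain lm1 where l1: "lm1 \<in> carrier R" "wv c i0 k1 = vsm lm1 z" using par[OF k(1,2)] by blast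
  obtain lm2 where l2: "lm2 \<in> carrier R" "wv c i0 k2 = vsm lm2 z" using par[OF k(3,4)] by blast
  have "c i0 = lm1 \<otimes> z k1" using fun_cong[OF l1(2), of k1] wv_comp[OF cV i0(1) k(1,2) k(1)] k by simp
  then have zk1: "z k1 \<noteq> \<zero>" using ci0 l1 by auto
  have "\<zero> = lm2 \<otimes> z k1" using fun_cong[OF l2(2), of k1] wv_comp[OF cV i0(1) k(3,4) k(1)] k by simp
  moreover have "z k1 \<in> carrier R" using z V_comp k by auto
  ultimately have "lm2 = \<zero>" using zk1 integral_iff l2(1) by auto
  moreover have "c i0 = lm2 \<otimes> z k2" using fun_cong[OF l2(2), of k2] wv_comp[OF cV i0(1) k(3,4) k(3)] k by simp
  ultimately show False using ci0 z V_comp k by simp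
qed

end


context sq_setup begin

lemma dot2: assumes d: "d = 2" and i1: "i1 < d" and x: "x \<in> V" and v: "v \<in> V"
  shows "dot x v = x i1 \<otimes> v i1 \<oplus> x (1 - i1) \<otimes> v (1 - i1)"
proof -
  have ne: "i1 \<noteq> 1 - i1" using i1 d by arith
  have e: "{..<d} = insert i1 {1 - i1}" using d i1 by auto
  have "dot x v = (\<Oplus>i\<in>insert i1 {1 - i1}. x i \<otimes> v i)" unfolding dotp_def e ..
  also have "\<dots> = x i1 \<otimes> v i1 \<oplus> (\<Oplus>i\<in>{1 - i1}. x i \<otimes> v i)"
    using i1 d x v ne by (intro finsum_insert) (auto simp: V_comp)
  also have "\<dots> = x i1 \<otimes> v i1 \<oplus> x (1 - i1) \<otimes> v (1 - i1)"
    using i1 d x v by (simp add: V_comp)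
  finally show ?thesis .
qed

lemma par2: assumes d: "d = 2" and v: "v \<in> V" "v \<noteq> vz" and u: "u \<in> V" and w: "w \<in> V" "w \<noteq> vz"
  and uv: "dot u v = \<zero>" and wv: "dot w v = \<zero>"
  shows "\<exists>\<mu>\<in>carrier R. u = vsm \<mu> w"
proof -
  obtain i1 where i1: "i1 < d" "v i1 \<noteq> \<zero>" using nz_comp[OF v] by blast
  define i2 where "i2 = 1 - i1"
  have i2: "i2 < d" "i2 \<noteq> i1" "\<And>i. i < d \<Longrightarrow> i = i1 \<or> i = i2" using i1 d unfolding i2_def by arith+
  have vC: "v i1 \<in> Cs" using i1 v V_comp by auto
  note iv = inv_Cs[OF vC]
  have ivc: "inv (v i1) \<in> carrier R" using iv by simp
  have solve: "x i1 = inv (v i1) \<otimes> \<ominus> (x i2 \<otimes> v i2)" if x: "x \<in> V" "dot x v = \<zero>" for x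
  proof -
    have xc: "x i1 \<in> carrier R" "x i2 \<in> carrier R" "v i2 \<in> carrier R" "v i1 \<in> carrier R"
      using x v i1 i2 V_comp by auto
    have "x i1 \<otimes> v i1 \<oplus> x i2 \<otimes> v i2 = \<zero>" using dot2[OF d i1(1) x(1) v(1)] x by (simp add: i2_def)
    then have "x i1 \<otimes> v i1 = \<ominus> (x i2 \<otimes> v i2)" using add_zero_neg xc by simp
    moreover have "x i1 = inv (v i1) \<otimes> (x i1 \<otimes> v i1)"
    proof -
      have "inv (v i1) \<otimes> (x i1 \<otimes> v i1) = x i1 \<otimes> (inv (v i1) \<otimes> v i1)"
        using ivc xc by algebra
      then show ?thesis using iv xc by simp
    qed
    ultimately show ?thesis by simp
  qed
  have wc: "w i1 \<in> carrier R" "w i2 \<in> carrier R" using w i1 i2 V_comp by auto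
  have uc: "u i1 \<in> carrier R" "u i2 \<in> carrier R" using u i1 i2 V_comp by auto
  have vc: "v i2 \<in> carrier R" using v i2 V_comp by auto
  have w2: "w i2 \<noteq> \<zero>"
  proof
    assume h: "w i2 = \<zero>"
    then have "w i1 = \<zero>" using solve[OF w(1) wv] iv vc by simp
    then have "w = vz" using h i2(3) w by (intro V_ext) auto
    then show False using w by simp
  qed
  have w2C: "w i2 \<in> Cs" using w2 wc by simp
  note iw = inv_Cs[OF w2C]
  define \<mu> where "\<mu> = u i2 \<otimes> inv (w i2)"
  have mc: "\<mu> \<in> carrier R" using uc iw by (simp add: \<mu>_def)
  have m2: "\<mu> \<otimes> w i2 = u i2" using m_assoc[of "u i2" "inv (w i2)" "w i2"] uc iw wc by (simp add: \<mu>_def)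
  have "u = vsm \<mu> w"
  proof (rule V_ext)
    fix i assume i: "i < d"
    show "u i = vsm \<mu> w i"
    proof (cases "i = i2")
      case True then show ?thesis using m2 i by simp
    next
      case False
      then have ii: "i = i1" using i2(3)[OF i] by simp
      have "\<mu> \<otimes> w i1 = \<mu> \<otimes> (inv (v i1) \<otimes> \<ominus> (w i2 \<otimes> v i2))" using solve[OF w(1) wv] by simp
      also have "\<dots> = inv (v i1) \<otimes> \<ominus> ((\<mu> \<otimes> w i2) \<otimes> v i2)"
        using mc ivc wc vc by algebra
      also have "\<dots> = u i1" using m2 solve[OF u uv] by simp
      finally show ?thesis using ii i by simp
    qed
  qed (use u w mc in auto)
  then show ?thesis using mc by blast
qed

end


context sq_setup begin

lemma dir_exists: assumes z: "z \<in> V" "z \<noteq> vz"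
  shows "\<exists>w p r. w \<in> V \<and> p < d \<and> w p \<noteq> \<zero> \<and> r < d \<and> r \<noteq> p \<and> Av z r \<noteq> \<zero> \<and> dot w (Av z) = \<zero> \<and>
     (\<forall>y. y \<in> V \<longrightarrow> Q w = \<zero> \<longrightarrow> dot y (Av w) = \<zero> \<longrightarrow> Q y \<noteq> j)"
proof -
  define c where "c = Av z"
  have cV: "c \<in> V" using z by (simp add: c_def)
  have cnz: "c \<noteq> vz" using Av_inj z by (auto simp: c_def)
  obtain i0 where i0: "i0 < d" "c i0 \<noteq> \<zero>" using nz_comp[OF cV cnz] by blast
  show ?thesis
  proof (cases "3 \<le> d")
    case True
    then obtain w p where wp: "w \<in> V" "p < d" "p \<noteq> i0" "w p \<noteq> \<zero>" "dot w (Av z) = \<zero>" "Q w \<noteq> \<zero>"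
      using good_d3[OF True z i0(1)] i0 by (auto simp: c_def)
    then show ?thesis using i0 by (intro exI[of _ w] exI[of _ p] exI[of _ i0]) (auto simp: c_def)
  next
    case False
    then have d: "d = 2" using d2 by simp
    define m where "m = 1 - i0"
    have m: "m < d" "m \<noteq> i0" using i0 d unfolding m_def by arith+
    define w where "w = wv c i0 m"
    have wV: "w \<in> V" using wv_V[OF cV i0(1) m(1)] by (simp add: w_def)
    have wm: "w m = c i0" using wv_comp[OF cV i0(1) m m(1)] by (simp add: w_def)
    have wnz: "w \<noteq> vz" using wm i0 m by auto
    have wc: "dot w c = \<zero>" using wv_dot_c[OF cV i0(1) m] by (simp add: w_def)
    have good: "Q y \<noteq> j" if y: "y \<in> V" "Q w = \<zero>" "dot y (Av w) = \<zero>" for y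
    proof -
      have avnz: "Av w \<noteq> vz" using Av_inj wV wnz by auto
      have "dot w (Av w) = \<zero>" using y(2) Q_dot[OF wV] by simp
      then obtain \<mu> where mu: "\<mu> \<in> carrier R" "y = vsm \<mu> w"
        using par2[OF d _ avnz y(1) wV wnz y(3)] wV by auto
      then have "Q y = \<zero>" using Q_sm[OF mu(1) wV] y(2) by simp
      then show ?thesis using j0 by simp
    qed
    show ?thesis using wV m wm i0 wc good
      by (intro exI[of _ w] exI[of _ m] exI[of _ i0]) (auto simp: c_def)
  qed
qed

lemma N_bound: assumes z: "z \<in> V" "z \<noteq> vz"
  shows "card {x \<in> S. vadd z (vneg x) \<in> S} \<le> 2 * q ^ (d - 2)"
proof -
  define c where "c = Av z"
  have cV: "c \<in> V" using z by (simp add: c_def)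
  have twoC: "\<one> \<oplus> \<one> \<in> Cs" using two by simp
  note i2 = inv_Cs[OF twoC]
  define k where "k = inv (\<one> \<oplus> \<one>) \<otimes> Q z"
  have kc: "k \<in> carrier R" using i2 z by (simp add: k_def)
  have sub: "{x \<in> S. vadd z (vneg x) \<in> S} \<subseteq> {x \<in> V. Q x = j \<and> dot x c = k}"
  proof
    fix x assume x: "x \<in> {x \<in> S. vadd z (vneg x) \<in> S}"
    then have xV: "x \<in> V" and Qx: "Q x = j" and Qzx: "Q (vadd z (vneg x)) = j" by (auto simp: S_iff)
    define D where "D = dot x c"
    have Dc: "D \<in> carrier R" using xV cV by (simp add: D_def)
    have "Q (vadd z (vneg x)) = Q z \<oplus> Q x \<oplus> (\<one> \<oplus> \<one>) \<otimes> (\<ominus> \<one> \<otimes> D)"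
      using z xV by (simp add: Q_add Q_neg vneg_Av vneg_def[symmetric] dot_neg_r D_def c_def dot_Av_sym[of x z] l_minus)
    then have e: "Q z \<oplus> j \<oplus> (\<one> \<oplus> \<one>) \<otimes> (\<ominus> \<one> \<otimes> D) = j" using Qx Qzx by simp
    have "Q z \<ominus> (\<one> \<oplus> \<one>) \<otimes> D = (Q z \<oplus> j \<oplus> (\<one> \<oplus> \<one>) \<otimes> (\<ominus> \<one> \<otimes> D)) \<ominus> j"
      using Q_closed[OF z(1)] jc Dc by algebra
    also have "\<dots> = \<zero>" using e jc by (simp add: a_minus_def r_neg)
    finally have "Q z = (\<one> \<oplus> \<one>) \<otimes> D" using minus_zero_iff Q_closed[OF z(1)] Dc by simp
    then have "k = inv (\<one> \<oplus> \<one>) \<otimes> ((\<one> \<oplus> \<one>) \<otimes> D)" by (simp add: k_def)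
    also have "\<dots> = D" using i2 Dc by (simp add: m_assoc[symmetric])
    finally show "x \<in> {x \<in> V. Q x = j \<and> dot x c = k}" using xV Qx by (simp add: D_def)
  qed
  obtain w p r where wpr: "w \<in> V" "p < d" "w p \<noteq> \<zero>" "r < d" "r \<noteq> p" "c r \<noteq> \<zero>" "dot w c = \<zero>"
    "\<And>y. y \<in> V \<Longrightarrow> Q w = \<zero> \<Longrightarrow> dot y (Av w) = \<zero> \<Longrightarrow> Q y \<noteq> j"
    using dir_exists[OF z] by (auto simp: c_def)
  have "card {x \<in> S. vadd z (vneg x) \<in> S} \<le> card {x \<in> V. Q x = j \<and> dot x c = k}"
    using sub V_fin by (intro card_mono) auto
  also have "\<dots> \<le> 2 * q ^ (d - 2)"
    using wpr by (intro line_count[OF cV kc]) auto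
  finally show ?thesis .
qed

end


context sq_setup begin

lemma vsub_iff: "a \<in> V \<Longrightarrow> b \<in> V \<Longrightarrow> vadd a (vneg b) = vz \<longleftrightarrow> a = b"
  using vsub_z vadd_neg_z by blast

lemma planch:
  fixes P :: "'b set" and sv :: "'b \<Rightarrow> nat \<Rightarrow> nat" and h :: "'b \<Rightarrow> complex"
  assumes P: "finite P" and sv: "\<And>p. p \<in> P \<Longrightarrow> sv p \<in> V"
  shows "(\<Sum>m\<in>V. (cmod (\<Sum>p\<in>P. \<chi> (\<ominus> dot (sv p) m) * h p))^2)
       = real (q ^ d) * Re (\<Sum>p\<in>P. \<Sum>p'\<in>P. if sv p = sv p' then h p * cnj (h p') else 0)"
proof -
  let ?Z = "\<Sum>p\<in>P. \<Sum>p'\<in>P. if sv p = sv p' then h p * cnj (h p') else 0"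
  have "complex_of_real (\<Sum>m\<in>V. (cmod (\<Sum>p\<in>P. \<chi> (\<ominus> dot (sv p) m) * h p))^2)
      = (\<Sum>m\<in>V. (\<Sum>p\<in>P. \<chi> (\<ominus> dot (sv p) m) * h p) * cnj (\<Sum>p\<in>P. \<chi> (\<ominus> dot (sv p) m) * h p))"
    by (simp only: of_real_sum complex_norm_square)
  also have "\<dots> = (\<Sum>m\<in>V. \<Sum>p\<in>P. \<Sum>p'\<in>P. h p * cnj (h p') * \<chi> (dot m (vadd (sv p') (vneg (sv p)))))"
  proof (rule sum.cong[OF refl])
    fix m assume m: "m \<in> V"
    have e: "\<chi> (\<ominus> dot (sv p) m) * cnj (\<chi> (\<ominus> dot (sv p') m)) = \<chi> (dot m (vadd (sv p') (vneg (sv p))))"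
      if p: "p \<in> P" "p' \<in> P" for p p'
    proof -
      have "cnj (\<chi> (\<ominus> dot (sv p') m)) = \<chi> (dot (sv p') m)"
        using sv p m by (simp add: chi_cnj)
      moreover have "dot m (vadd (sv p') (vneg (sv p))) = \<ominus> dot (sv p) m \<oplus> dot (sv p') m"
        using sv p m by (simp add: dot_add_r dot_neg_r dot_comm[of m] a_comm)
      ultimately show ?thesis using sv p m by (simp add: chi_add)
    qed
    show "(\<Sum>p\<in>P. \<chi> (\<ominus> dot (sv p) m) * h p) * cnj (\<Sum>p\<in>P. \<chi> (\<ominus> dot (sv p) m) * h p)
        = (\<Sum>p\<in>P. \<Sum>p'\<in>P. h p * cnj (h p') * \<chi> (dot m (vadd (sv p') (vneg (sv p)))))"
      by (simp add: cnj_sum sum_product e[symmetric] mult_ac cong: sum.cong)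
  qed
  also have "\<dots> = (\<Sum>p\<in>P. \<Sum>p'\<in>P. h p * cnj (h p') * (\<Sum>m\<in>V. \<chi> (dot m (vadd (sv p') (vneg (sv p))))))"
    by (simp add: sum.swap[of _ V] sum_distrib_left)
  also have "\<dots> = of_nat (q ^ d) * ?Z"
  proof -
    have t: "h p * cnj (h p') * (\<Sum>m\<in>V. \<chi> (dot m (vadd (sv p') (vneg (sv p)))))
           = of_nat (q ^ d) * (if sv p = sv p' then h p * cnj (h p') else 0)" if p: "p \<in> P" "p' \<in> P" for p p'
    proof -
      have "(\<Sum>m\<in>V. \<chi> (dot m (vadd (sv p') (vneg (sv p))))) = (if sv p = sv p' then of_nat (q ^ d) else 0)"
        using orth_vec[of "vadd (sv p') (vneg (sv p))"] vsub_iff[of "sv p'" "sv p"] sv p by auto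
      then show ?thesis by simp
    qed
    have "(\<Sum>p\<in>P. \<Sum>p'\<in>P. h p * cnj (h p') * (\<Sum>m\<in>V. \<chi> (dot m (vadd (sv p') (vneg (sv p))))))
        = (\<Sum>p\<in>P. \<Sum>p'\<in>P. of_nat (q ^ d) * (if sv p = sv p' then h p * cnj (h p') else 0))"
      by (rule sum.cong[OF refl], rule sum.cong[OF refl], rule t)
    then show ?thesis by (simp add: sum_distrib_left)
  qed
  finally have "complex_of_real (\<Sum>m\<in>V. (cmod (\<Sum>p\<in>P. \<chi> (\<ominus> dot (sv p) m) * h p))^2) = of_nat (q ^ d) * ?Z" .
  then have "Re (complex_of_real (\<Sum>m\<in>V. (cmod (\<Sum>p\<in>P. \<chi> (\<ominus> dot (sv p) m) * h p))^2)) = Re (of_nat (q ^ d) * ?Z)"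
    by simp
  then show ?thesis by simp
qed

end


context sq_setup begin

lemma solve_y: "x \<in> V \<Longrightarrow> y \<in> V \<Longrightarrow> vadd x y = a \<Longrightarrow> y = vadd a (vneg x)"
  using cancel1[of y x] vadd_comm[of x y] by simp

lemma vneg_vneg: "x \<in> V \<Longrightarrow> vneg (vneg x) = x"
  by (rule V_ext) (auto simp: V_comp r5 m_assoc[symmetric])

lemma vneg_S: "x \<in> S \<Longrightarrow> vneg x \<in> S" by (simp add: S_iff Q_neg)

lemma sum_zero_iff: "x \<in> V \<Longrightarrow> y \<in> V \<Longrightarrow> vadd x y = vz \<longleftrightarrow> y = vneg x"
proof
  assume "x \<in> V" "y \<in> V" "vadd x y = vz"
  then have "y = vadd vz (vneg x)" using solve_y by blast
  then show "y = vneg x" using \<open>x \<in> V\<close> vadd_comm[of vz "vneg x"] vadd_z[of "vneg x"] by simp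
qed (simp add: vadd_neg_z)

lemma fiber_card: assumes a: "a \<in> V" "a \<noteq> vz"
  shows "card {p \<in> S \<times> S. vadd (fst p) (snd p) = a} \<le> 2 * q ^ (d - 2)"
proof -
  have "card {p \<in> S \<times> S. vadd (fst p) (snd p) = a} \<le> card {x \<in> S. vadd a (vneg x) \<in> S}"
  proof (rule card_inj_on_le[where f=fst])
    show "inj_on fst {p \<in> S \<times> S. vadd (fst p) (snd p) = a}"
    proof (rule inj_onI)
      fix p p' assume p: "p \<in> {p \<in> S \<times> S. vadd (fst p) (snd p) = a}" and p': "p' \<in> {p \<in> S \<times> S. vadd (fst p) (snd p) = a}"
        and e: "fst p = fst p'"
      have "fst p \<in> V" "snd p \<in> V" "vadd (fst p) (snd p) = a" using p S_sub by auto
      then have "snd p = vadd a (vneg (fst p))" by (rule solve_y)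
      moreover have "fst p' \<in> V" "snd p' \<in> V" "vadd (fst p') (snd p') = a" using p' S_sub by auto
      then have "snd p' = vadd a (vneg (fst p'))" by (rule solve_y)
      ultimately show "p = p'" using e by (simp add: prod_eq_iff)
    qed
    show "fst ` {p \<in> S \<times> S. vadd (fst p) (snd p) = a} \<subseteq> {x \<in> S. vadd a (vneg x) \<in> S}"
    proof
      fix x assume "x \<in> fst ` {p \<in> S \<times> S. vadd (fst p) (snd p) = a}"
      then obtain y where y: "x \<in> S" "y \<in> S" "vadd x y = a" by force
      then have "y = vadd a (vneg x)" using S_sub solve_y[of x y a] by auto
      then show "x \<in> {x \<in> S. vadd a (vneg x) \<in> S}" using y by simp
    qed
    show "finite {x \<in> S. vadd a (vneg x) \<in> S}" using S_fin by simp
  qed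
  also have "\<dots> \<le> 2 * q ^ (d - 2)" by (rule N_bound[OF a])
  finally show ?thesis .
qed

lemma sym_bound:
  fixes P :: "'b set" and a :: "'b \<Rightarrow> real" and c :: "'b \<Rightarrow> 'b \<Rightarrow> bool"
  assumes P: "finite P" and a0: "\<And>p. a p \<ge> 0" and sym: "\<And>p p'. c p p' = c p' p"
    and cnt: "\<And>p. p \<in> P \<Longrightarrow> real (card {p' \<in> P. c p p'}) \<le> M"
  shows "(\<Sum>p\<in>P. \<Sum>p'\<in>P. if c p p' then a p * a p' else 0) \<le> M * (\<Sum>p\<in>P. (a p)^2)"
proof -
  have "(\<Sum>p\<in>P. \<Sum>p'\<in>P. if c p p' then a p * a p' else 0)
      \<le> (\<Sum>p\<in>P. \<Sum>p'\<in>P. if c p p' then ((a p)^2 + (a p')^2) / 2 else 0)"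
  proof (intro sum_mono)
    fix p p'
    have "a p * a p' \<le> ((a p)^2 + (a p')^2) / 2"
      using sum_squares_bound[of "a p" "a p'"] by (simp add: power2_eq_square)
    then show "(if c p p' then a p * a p' else 0) \<le> (if c p p' then ((a p)^2 + (a p')^2) / 2 else 0)" by simp
  qed
  also have "\<dots> = (\<Sum>p\<in>P. \<Sum>p'\<in>P. if c p p' then (a p)^2 / 2 else 0) + (\<Sum>p\<in>P. \<Sum>p'\<in>P. if c p p' then (a p')^2 / 2 else 0)"
  proof -
    have e: "(if c p p' then ((a p)^2 + (a p')^2) / 2 else 0) = (if c p p' then (a p)^2 / 2 else 0) + (if c p p' then (a p')^2 / 2 else 0)" for p p'
      by (simp add: add_divide_distrib)
    show ?thesis by (simp only: e sum.distrib)
  qed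
  also have "(\<Sum>p\<in>P. \<Sum>p'\<in>P. if c p p' then (a p')^2 / 2 else 0) = (\<Sum>p\<in>P. \<Sum>p'\<in>P. if c p p' then (a p)^2 / 2 else 0)"
    by (subst sum.swap) (simp add: sym)
  also have "(\<Sum>p\<in>P. \<Sum>p'\<in>P. if c p p' then (a p)^2 / 2 else 0) = (\<Sum>p\<in>P. (a p)^2 / 2 * real (card {p' \<in> P. c p p'}))"
    using P by (simp add: sum.If_cases Int_def mult_ac)
  also have "\<dots> + \<dots> = (\<Sum>p\<in>P. (a p)^2 * real (card {p' \<in> P. c p p'}))" by (simp add: sum.distrib[symmetric])
  also have "\<dots> \<le> (\<Sum>p\<in>P. (a p)^2 * M)" using cnt by (intro sum_mono mult_left_mono) auto
  also have "\<dots> = M * (\<Sum>p\<in>P. (a p)^2)" by (simp add: sum_distrib_left mult.commute)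
  finally show ?thesis .
qed

end


context sq_setup begin

definition Fs where "Fs f m = (\<Sum>x\<in>S. \<chi> (\<ominus> dot x m) * f x)"

lemma Fs_sq: assumes m: "m \<in> V"
  shows "(Fs f m)^2 = (\<Sum>p\<in>S \<times> S. \<chi> (\<ominus> dot (vadd (fst p) (snd p)) m) * (f (fst p) * f (snd p)))"
proof -
  have "(Fs f m)^2 = (\<Sum>x\<in>S. \<Sum>y\<in>S. (\<chi> (\<ominus> dot x m) * f x) * (\<chi> (\<ominus> dot y m) * f y))"
    by (simp add: Fs_def power2_eq_square sum_product)
  also have "\<dots> = (\<Sum>p\<in>S \<times> S. (\<chi> (\<ominus> dot (fst p) m) * f (fst p)) * (\<chi> (\<ominus> dot (snd p) m) * f (snd p)))"
    by (simp add: sum.cartesian_product case_prod_beta)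
  also have "\<dots> = (\<Sum>p\<in>S \<times> S. \<chi> (\<ominus> dot (vadd (fst p) (snd p)) m) * (f (fst p) * f (snd p)))"
  proof (rule sum.cong[OF refl])
    fix p assume p: "p \<in> S \<times> S"
    then have xy: "fst p \<in> V" "snd p \<in> V" using S_sub by auto
    have "\<ominus> dot (vadd (fst p) (snd p)) m = \<ominus> dot (fst p) m \<oplus> \<ominus> dot (snd p) m"
      using xy m by (simp add: dot_add_l minus_add)
    then show "(\<chi> (\<ominus> dot (fst p) m) * f (fst p)) * (\<chi> (\<ominus> dot (snd p) m) * f (snd p)) =
        \<chi> (\<ominus> dot (vadd (fst p) (snd p)) m) * (f (fst p) * f (snd p))"
      using xy m by (simp add: chi_add mult_ac)
  qed
  finally show ?thesis .
qed

lemma sumsq_prod: "(\<Sum>p\<in>S \<times> S. (cmod (f (fst p) * f (snd p)))^2) = (\<Sum>x\<in>S. (cmod (f x))^2)^2"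
  by (simp add: power2_eq_square sum_product sum.cartesian_product case_prod_beta norm_mult mult_ac)

lemma zero_part: "(\<Sum>p\<in>S \<times> S. if vadd (fst p) (snd p) = vz then cmod (f (fst p) * f (snd p)) else 0)
    \<le> (\<Sum>x\<in>S. (cmod (f x))^2)"
proof -
  have "(\<Sum>p\<in>S \<times> S. if vadd (fst p) (snd p) = vz then cmod (f (fst p) * f (snd p)) else 0)
      = (\<Sum>x\<in>S. \<Sum>y\<in>S. if vadd x y = vz then cmod (f x) * cmod (f y) else 0)"
    by (simp add: sum.cartesian_product case_prod_beta) (intro sum.cong refl, simp add: norm_mult)
  also have "\<dots> = (\<Sum>x\<in>S. \<Sum>y\<in>S. if y = vneg x then cmod (f x) * cmod (f y) else 0)"
  proof -
    have iff: "\<And>x y. x \<in> S \<Longrightarrow> y \<in> S \<Longrightarrow> (vadd x y = vz) = (y = vneg x)"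
      using S_sub sum_zero_iff by blast
    show ?thesis by (intro sum.cong refl) (simp add: iff)
  qed
  also have "\<dots> = (\<Sum>x\<in>S. cmod (f x) * cmod (f (vneg x)))"
    using S_fin vneg_S by (simp add: sum.delta')
  also have "\<dots> \<le> (\<Sum>x\<in>S. ((cmod (f x))^2 + (cmod (f (vneg x)))^2) / 2)"
  proof (intro sum_mono)
    fix x
    show "cmod (f x) * cmod (f (vneg x)) \<le> ((cmod (f x))^2 + (cmod (f (vneg x)))^2) / 2"
      using sum_squares_bound[of "cmod (f x)" "cmod (f (vneg x))"] by (simp add: power2_eq_square)
  qed
  also have "\<dots> = ((\<Sum>x\<in>S. (cmod (f x))^2) + (\<Sum>x\<in>S. (cmod (f (vneg x)))^2)) / 2"
    by (simp only: sum_divide_distrib[symmetric] sum.distrib)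
  also have "(\<Sum>x\<in>S. (cmod (f (vneg x)))^2) = (\<Sum>x\<in>S. (cmod (f x))^2)"
    by (rule sum.reindex_bij_witness[where i=vneg and j=vneg]) (auto simp: vneg_S vneg_vneg S_iff Q_neg)
  finally show ?thesis by simp
qed

lemma four_bound:
  "(\<Sum>m\<in>V. (cmod (Fs f m))^4) \<le> real (q ^ d) * (1 + 2 * real q ^ (d - 2)) * (\<Sum>x\<in>S. (cmod (f x))^2)^2"
proof -
  let ?P = "S \<times> S"
  let ?sv = "\<lambda>p. vadd (fst p) (snd p)"
  let ?h = "\<lambda>p. f (fst p) * f (snd p)"
  let ?a = "\<lambda>p. cmod (?h p)"
  let ?T = "\<Sum>x\<in>S. (cmod (f x))^2"
  define M where "M = 2 * real q ^ (d - 2)"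
  have P: "finite ?P" using S_fin by simp
  have svV: "\<And>p. p \<in> ?P \<Longrightarrow> ?sv p \<in> V" using S_sub vadd_V by (auto simp: subset_iff)
  have s1a: "(\<Sum>m\<in>V. (cmod (Fs f m))^4) = (\<Sum>m\<in>V. (cmod (\<Sum>p\<in>?P. \<chi> (\<ominus> dot (?sv p) m) * ?h p))^2)"
  proof (intro sum.cong refl)
    fix m assume m: "m \<in> V"
    have "(cmod (Fs f m))^4 = (cmod ((Fs f m)^2))^2" by (simp add: norm_power power_mult[symmetric])
    then show "(cmod (Fs f m))^4 = (cmod (\<Sum>p\<in>?P. \<chi> (\<ominus> dot (?sv p) m) * ?h p))^2" using Fs_sq[OF m] by simp
  qed
  have s1b: "(\<Sum>m\<in>V. (cmod (\<Sum>p\<in>?P. \<chi> (\<ominus> dot (?sv p) m) * ?h p))^2) = real (q ^ d) * Re (\<Sum>p\<in>?P. \<Sum>p'\<in>?P. if ?sv p = ?sv p' then ?h p * cnj (?h p') else 0)"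
    by (rule planch[OF P svV])
  have s2: "Re (\<Sum>p\<in>?P. \<Sum>p'\<in>?P. if ?sv p = ?sv p' then ?h p * cnj (?h p') else 0)
      \<le> (\<Sum>p\<in>?P. \<Sum>p'\<in>?P. if ?sv p = ?sv p' then ?a p * ?a p' else 0)"
  proof -
    have "Re (\<Sum>p\<in>?P. \<Sum>p'\<in>?P. if ?sv p = ?sv p' then ?h p * cnj (?h p') else 0)
        = (\<Sum>p\<in>?P. \<Sum>p'\<in>?P. Re (if ?sv p = ?sv p' then ?h p * cnj (?h p') else 0))" by (simp add: Re_sum)
    also have "\<dots> \<le> (\<Sum>p\<in>?P. \<Sum>p'\<in>?P. if ?sv p = ?sv p' then ?a p * ?a p' else 0)"
    proof (intro sum_mono)
      fix p p'
      have "Re (?h p * cnj (?h p')) \<le> cmod (?h p * cnj (?h p'))" by (rule complex_Re_le_cmod)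
      then show "Re (if ?sv p = ?sv p' then ?h p * cnj (?h p') else 0) \<le> (if ?sv p = ?sv p' then ?a p * ?a p' else 0)"
        by (simp add: norm_mult del: norm_mult_numeral1 norm_mult_numeral2)
    qed
    finally show ?thesis .
  qed
  have s3: "(\<Sum>p\<in>?P. \<Sum>p'\<in>?P. if ?sv p = ?sv p' then ?a p * ?a p' else 0)
    = (\<Sum>p\<in>?P. \<Sum>p'\<in>?P. (if ?sv p = vz then ?a p else 0) * (if ?sv p' = vz then ?a p' else 0))
      + (\<Sum>p\<in>?P. \<Sum>p'\<in>?P. if ?sv p = ?sv p' \<and> ?sv p \<noteq> vz then ?a p * ?a p' else 0)"
  proof -
    have e: "(if ?sv p = ?sv p' then ?a p * ?a p' else 0) = (if ?sv p = vz then ?a p else 0) * (if ?sv p' = vz then ?a p' else 0)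
       + (if ?sv p = ?sv p' \<and> ?sv p \<noteq> vz then ?a p * ?a p' else 0)" for p p' by auto
    show ?thesis by (simp only: e sum.distrib)
  qed
  have s4: "(\<Sum>p\<in>?P. \<Sum>p'\<in>?P. (if ?sv p = vz then ?a p else 0) * (if ?sv p' = vz then ?a p' else 0))
      = (\<Sum>p\<in>?P. if ?sv p = vz then ?a p else 0)^2"
    by (simp add: power2_eq_square sum_product)
  have s5: "(\<Sum>p\<in>?P. \<Sum>p'\<in>?P. if ?sv p = ?sv p' \<and> ?sv p \<noteq> vz then ?a p * ?a p' else 0) \<le> M * (\<Sum>p\<in>?P. (?a p)^2)"
  proof (rule sym_bound[OF P])
    fix p assume p: "p \<in> ?P"
    show "real (card {p' \<in> ?P. ?sv p = ?sv p' \<and> ?sv p \<noteq> vz}) \<le> M"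
    proof (cases "?sv p = vz")
      case True then show ?thesis by (simp add: M_def)
    next
      case False
      have "{p' \<in> ?P. ?sv p = ?sv p' \<and> ?sv p \<noteq> vz} = {p' \<in> ?P. ?sv p' = ?sv p}" using False by auto
      moreover have "real (card {p' \<in> ?P. ?sv p' = ?sv p}) \<le> real (2 * q ^ (d - 2))"
        using fiber_card[OF svV[OF p] False] by (rule of_nat_mono)
      ultimately show ?thesis by (simp add: M_def)
    qed
  qed auto
  have main: "(\<Sum>m\<in>V. (cmod (Fs f m))^4) \<le> real (q ^ d) * ((\<Sum>p\<in>?P. if ?sv p = vz then ?a p else 0)^2 + M * (\<Sum>p\<in>?P. (?a p)^2))"
    unfolding s1a s1b using s2 s3 s4 s5 by (intro mult_left_mono) auto
  have z1: "(\<Sum>p\<in>?P. if ?sv p = vz then ?a p else 0) \<le> ?T" by (rule zero_part)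
  have z0: "0 \<le> (\<Sum>p\<in>?P. if ?sv p = vz then ?a p else 0)" by (intro sum_nonneg) auto
  have "(\<Sum>p\<in>?P. if ?sv p = vz then ?a p else 0)^2 \<le> ?T^2" using z0 z1 by (intro power_mono) auto
  then have "(\<Sum>p\<in>?P. if ?sv p = vz then ?a p else 0)^2 + M * (\<Sum>p\<in>?P. (?a p)^2) \<le> ?T^2 + M * ?T^2"
    using sumsq_prod[of f] by simp
  then have "real (q ^ d) * ((\<Sum>p\<in>?P. if ?sv p = vz then ?a p else 0)^2 + M * (\<Sum>p\<in>?P. (?a p)^2))
      \<le> real (q ^ d) * (?T^2 + M * ?T^2)" by (intro mult_left_mono) auto
  with main show ?thesis by (simp add: M_def algebra_simps)
qed

end


context sq_setup begin

lemma ext_bound: "norm_dm R d 4 (ext_op R d \<chi> S f) \<le> 6 * norm_dsigma S 2 f"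
proof -
  define s where "s = real (card S)"
  define T where "T = (\<Sum>x\<in>S. (cmod (f x))^2)"
  have q3: "real q \<ge> 3" using q_ge3 by simp
  have T0: "T \<ge> 0" by (simp add: T_def sum_nonneg)
  have Sl: "real q ^ d \<le> 20 * (real q * s)" using S_lower by (simp add: s_def)
  have qd1: "real q ^ d = real q * real q ^ (d - 1)" using d2 by (simp add: power_eq_if)
  have Sl2: "real q ^ (d - 1) \<le> 20 * s" using Sl q3 unfolding qd1 by (simp add: mult.left_commute)
  have qpos: "real q ^ (d - 1) > 0" using q3 by simp
  have s0: "s > 0" using Sl2 qpos by linarith
  have ext_eq: "cmod (ext_op R d \<chi> S f m) = cmod (Fs f m) / s" for m
    by (simp add: ext_op_def Fs_def s_def norm_mult norm_divide)
  have X: "(\<Sum>m\<in>V. cmod (ext_op R d \<chi> S f m) powr 4) = (\<Sum>m\<in>V. (cmod (Fs f m))^4) / s^4"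
    using s0 by (simp add: ext_eq power_divide sum_divide_distrib)
  have K1: "real q ^ d * (1 + 2 * real q ^ (d - 2)) \<le> 3 * real q ^ (2 * d - 2)"
  proof -
    have a: "real q ^ d \<le> real q ^ (2 * d - 2)" using q3 d2 by (intro power_increasing) auto
    have e: "d + (d - 2) = 2 * d - 2" using d2 by arith
    have b: "real q ^ d * real q ^ (d - 2) = real q ^ (2 * d - 2)" by (simp only: power_add[symmetric] e)
    show ?thesis using a b by (simp add: algebra_simps)
  qed
  have K2: "real q ^ (2 * d - 2) \<le> 400 * s^2"
  proof -
    have e2: "2 * d - 2 = (d - 1) * 2" using d2 by arith
    have "real q ^ (2 * d - 2) = (real q ^ (d - 1))^2" by (simp only: e2 power_mult)
    also have "\<dots> \<le> (20 * s)^2" using Sl2 qpos by (intro power_mono) auto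
    finally show ?thesis by (simp add: power_mult_distrib)
  qed
  have bnd: "(\<Sum>m\<in>V. (cmod (Fs f m))^4) \<le> 1296 * s^2 * T^2"
  proof -
    have "(\<Sum>m\<in>V. (cmod (Fs f m))^4) \<le> real (q ^ d) * (1 + 2 * real q ^ (d - 2)) * T^2"
      using four_bound[of f] by (simp add: T_def)
    also have "\<dots> \<le> 3 * real q ^ (2 * d - 2) * T^2" using K1 T0 by (intro mult_right_mono) auto
    also have "\<dots> \<le> 3 * (400 * s^2) * T^2" using K2 T0 by (intro mult_right_mono mult_left_mono) auto
    also have "\<dots> \<le> 1296 * s^2 * T^2" using T0 s0 by (intro mult_right_mono) auto
    finally show ?thesis .
  qed
  define Y where "Y = 6 * sqrt (T / s)"
  have Y0: "Y \<ge> 0" using T0 s0 by (simp add: Y_def)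
  have Y4: "Y ^ 4 = 1296 * (T / s)^2"
  proof -
    have "Y ^ 4 = 1296 * (sqrt (T / s) ^ 2)^2" by (simp add: Y_def power_mult_distrib power_mult[symmetric])
    then show ?thesis using T0 s0 by simp
  qed
  have Xb: "(\<Sum>m\<in>V. cmod (ext_op R d \<chi> S f m) powr 4) \<le> Y ^ 4"
  proof -
    have "(\<Sum>m\<in>V. cmod (ext_op R d \<chi> S f m) powr 4) \<le> 1296 * s^2 * T^2 / s^4"
      unfolding X using bnd s0 by (intro divide_right_mono) auto
    also have "\<dots> = Y ^ 4" using s0 by (simp add: Y4 power_divide field_simps)
    finally show ?thesis .
  qed
  have X0: "0 \<le> (\<Sum>m\<in>V. cmod (ext_op R d \<chi> S f m) powr 4)" by (intro sum_nonneg) auto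
  have "norm_dm R d 4 (ext_op R d \<chi> S f) = (\<Sum>m\<in>V. cmod (ext_op R d \<chi> S f m) powr 4) powr (1 / 4)"
    by (simp only: norm_dm_def V_def)
  also have "\<dots> \<le> (Y ^ 4) powr (1 / 4)" using powr_mono2[of "1/4", OF _ X0 Xb] by simp
  also have "\<dots> = Y"
  proof -
    have "Y ^ 4 = Y powr 4" using Y0 by simp
    then have "(Y ^ 4) powr (1 / 4) = Y powr (4 * (1 / 4))" by (simp only: powr_powr)
    also have "\<dots> = Y" using Y0 by simp
    finally show ?thesis .
  qed
  also have "\<dots> = 6 * norm_dsigma S 2 f"
  proof -
    have "norm_dsigma S 2 f = (T / s) powr (1 / 2)"
      by (simp add: norm_dsigma_def T_def s_def)
    also have "\<dots> = sqrt (T / s)" using T0 s0 by (simp add: powr_half_sqrt)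
    finally show ?thesis by (simp add: Y_def)
  qed
  finally show ?thesis .
qed

lemma R_bound: "R_star R d \<chi> S 2 4 \<le> 6"
  unfolding R_star_def
proof (rule cInf_lower)
  show "6 \<in> {C. 0 \<le> C \<and> (\<forall>f. norm_dm R d 4 (ext_op R d \<chi> S f) \<le> C * norm_dsigma S 2 f)}"
    using ext_bound by auto
  show "bdd_below {C. 0 \<le> C \<and> (\<forall>f. norm_dm R d 4 (ext_op R d \<chi> S f) \<le> C * norm_dsigma S 2 f)}"
    by (rule bdd_belowI[where m=0]) auto
qed

end

theorem theorem1p2:
  fixes d :: nat
  assumes "d \<ge> 2"
  shows "\<exists>C::real. \<forall>(R::nat ring) (\<chi>::nat \<Rightarrow> complex) (a::nat \<Rightarrow> nat \<Rightarrow> nat) (j::nat).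
     field R \<longrightarrow> finite (carrier R) \<longrightarrow> \<one>\<^bsub>R\<^esub> \<oplus>\<^bsub>R\<^esub> \<one>\<^bsub>R\<^esub> \<noteq> \<zero>\<^bsub>R\<^esub> \<longrightarrow>
     nontriv_add_char R \<chi> \<longrightarrow> sym_coeffs R d a \<longrightarrow> mat_invertible R d a \<longrightarrow>
     j \<in> carrier R \<longrightarrow> j \<noteq> \<zero>\<^bsub>R\<^esub> \<longrightarrow>
     R_star R d \<chi> (sphere_set R d a j) 2 4 \<le> C"
proof (intro exI[of _ 6] allI impI)
  fix R :: "nat ring" and \<chi> :: "nat \<Rightarrow> complex" and a :: "nat \<Rightarrow> nat \<Rightarrow> nat" and j :: nat
  assume h: "field R" "finite (carrier R)" "\<one>\<^bsub>R\<^esub> \<oplus>\<^bsub>R\<^esub> \<one>\<^bsub>R\<^esub> \<noteq> \<zero>\<^bsub>R\<^esub>"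
    "nontriv_add_char R \<chi>" "sym_coeffs R d a" "mat_invertible R d a" "j \<in> carrier R" "j \<noteq> \<zero>\<^bsub>R\<^esub>"
  have "sq_setup R d \<chi> a j"
    unfolding sq_setup_def sq_setup_axioms_def using h assms by auto
  then show "R_star R d \<chi> (sphere_set R d a j) 2 4 \<le> 6" by (rule sq_setup.R_bound)
qed


end
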